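(* Let $G=0$, $Q$, $R_Q$ and $S=R_Q^*+Q'$ be as follows: $Q$ is an adjoint-symmetry of $G=0$ with $G'^*(Q)=R_Q(G)$ identically and $E_u(QG)\not\equiv0$. Let $P\partial_u$ be a symmetry of $G=0$ with $G'(P)=R_P(G)$ identically for a linear total-differential operator $R_P$. Write $S^*=\sum_JW^JD_J$ and set $\mathrm{pr}\,\hat X_P(S^* ):=\sum_J (W^J)'(P)\,D_J$. Then the adjoint-symmetry $S(P)$ is a multiplier for a conservation law of $G=0$ (i.e. $E_u(S(P)G)\equiv0$) if and only if $$\big(\mathrm{pr}\,\hat X_P(S^* )+S^*R_P+P'^*S^*\big)G=0$$ holds identically (off $\mathcal E$).
   Context: Setting: independent variables $x=(x^1,\dots,x^n)$, one dependent variable $u$; differential functions are smooth functions of $x,u$ and finitely many $u_J$; $D_J$ are total derivatives. Fréchet derivative $f'=\sum_J(\partial f/\partial u_J)D_J$, so $(W^J)'(P)=\sum_K(\partial W^J/\partial u_K)D_KP$. Formal adjoint ${}^*$ of $\sum_Ja^JD_J$ is $A\mapsto\sum_J(-1)^{|J|}D_J(a^JA)$. $E_u(f)=\sum_J(-1)^{|J|}D_J(\partial f/\partial u_J)$. $\mathcal E$ is the solution space of $G=0$. Symmetry: $G'(P)|_{\mathcal E}=0$; adjoint-symmetry: $G'^*(Q)|_{\mathcal E}=0$; multiplier: $E_u(QG)\equiv0$. *)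

theory Defs
  imports "HOL-Analysis.Analysis"
begin

text \<open>Jet space over n independent variables indexed by a finite type 'i and one
dependent variable u.  A multi-index J is a function 'i => nat (J i = number of
differentiations in x^i).\<close>

datatype 'i coord = X 'i | U "'i \<Rightarrow> nat"

type_synonym 'i jet = "'i coord \<Rightarrow> real"
type_synonym 'i dfun = "'i jet \<Rightarrow> real"
type_synonym 'i dop = "('i \<Rightarrow> nat) \<Rightarrow> 'i dfun"

definition pd :: "'i coord \<Rightarrow> 'i dfun \<Rightarrow> 'i dfun" where
  "pd c f = (\<lambda>z. deriv (\<lambda>t. f (z(c := t))) (z c))"

definition iterpd :: "'i coord list \<Rightarrow> 'i dfun \<Rightarrow> 'i dfun" where
  "iterpd cs f = foldr pd cs f"

definition difffun :: "'i dfun \<Rightarrow> bool" where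
  "difffun f \<longleftrightarrow>
     (\<exists>S. finite S \<and> (\<forall>z w. (\<forall>c\<in>S. z c = w c) \<longrightarrow> f z = f w)) \<and>
     (\<forall>cs. continuous_on UNIV (iterpd cs f)) \<and>
     (\<forall>cs c z. (\<lambda>t. iterpd cs f (z(c := t))) differentiable (at (z c)))"

definition Dtot :: "'i \<Rightarrow> 'i dfun \<Rightarrow> 'i dfun" where
  "Dtot i f = (\<lambda>z. pd (X i) f z +
      (\<Sum>J | pd (U J) f \<noteq> (\<lambda>z. 0). z (U (J(i := J i + 1))) * pd (U J) f z))"

definition mlen :: "('i::finite \<Rightarrow> nat) \<Rightarrow> nat" where
  "mlen J = (\<Sum>i\<in>UNIV. J i)"

primrec DJn :: "nat \<Rightarrow> ('i \<Rightarrow> nat) \<Rightarrow> 'i dfun \<Rightarrow> 'i dfun" where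
  "DJn 0 J f = f"
| "DJn (Suc k) J f =
     (let i = (SOME i. 0 < J i) in Dtot i (DJn k (J(i := J i - 1)) f))"

text \<open>D_J (total derivatives commute, so the order chosen is immaterial).\<close>
definition DJ :: "('i::finite \<Rightarrow> nat) \<Rightarrow> 'i dfun \<Rightarrow> 'i dfun" where
  "DJ J f = DJn (mlen J) J f"

text \<open>Linear total-differential operator sum_J a^J D_J, given by its coefficients.\<close>
definition dsupp :: "'i dop \<Rightarrow> ('i \<Rightarrow> nat) set" where
  "dsupp A = {J. A J \<noteq> (\<lambda>z. 0)}"

definition is_dop :: "'i dop \<Rightarrow> bool" where
  "is_dop A \<longleftrightarrow> finite (dsupp A) \<and> (\<forall>J. difffun (A J))"

definition applyop :: "('i::finite) dop \<Rightarrow> 'i dfun \<Rightarrow> 'i dfun" where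
  "applyop A F = (\<lambda>z. \<Sum>J\<in>dsupp A. A J z * DJ J F z)"

definition adjapply :: "('i::finite) dop \<Rightarrow> 'i dfun \<Rightarrow> 'i dfun" where
  "adjapply A B = (\<lambda>z. \<Sum>J\<in>dsupp A. (-1::real) ^ mlen J * DJ J (\<lambda>w. A J w * B w) z)"

definition frechet_op :: "'i dfun \<Rightarrow> 'i dop" where
  "frechet_op f = (\<lambda>J. pd (U J) f)"

definition frechet :: "('i::finite) dfun \<Rightarrow> 'i dfun \<Rightarrow> 'i dfun" where
  "frechet f P = applyop (frechet_op f) P"

definition euler :: "('i::finite) dfun \<Rightarrow> 'i dfun" where
  "euler f = adjapply (frechet_op f) (\<lambda>z. 1)"

end

theory Submission
  imports Defs
begin


definition ldiff :: "'i dfun \<Rightarrow> bool" where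
  "ldiff f \<longleftrightarrow> (\<forall>c z. (\<lambda>t. f (z(c := t))) differentiable (at (z c)))"

definition RR :: "'i dfun \<Rightarrow> bool" where
  "RR f \<longleftrightarrow> continuous_on UNIV f \<and> ldiff f"

definition smooth :: "'i dfun \<Rightarrow> bool" where
  "smooth f \<longleftrightarrow> (\<forall>cs. RR (iterpd cs f))"

definition dep :: "'i coord set \<Rightarrow> 'i dfun \<Rightarrow> bool" where
  "dep S f \<longleftrightarrow> (\<forall>z w. (\<forall>c\<in>S. z c = w c) \<longrightarrow> f z = f w)"

lemma difffun_iff: "difffun f \<longleftrightarrow> (\<exists>S. finite S \<and> dep S f) \<and> smooth f"
  unfolding difffun_def dep_def smooth_def RR_def ldiff_def by blast

lemma ldiff_DERIV:
  assumes "ldiff f"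
  shows "((\<lambda>t. f (z(c := t))) has_real_derivative pd c f (z(c := t))) (at t)"
proof -
  have "(\<lambda>s. f (z(c := t, c := s))) differentiable (at ((z(c:=t)) c))"
    using assms unfolding ldiff_def by blast
  then have d: "(\<lambda>s. f (z(c := s))) differentiable (at t)" by simp
  have "pd c f (z(c := t)) = deriv (\<lambda>s. f (z(c := s))) t" by (simp add: pd_def)
  then show ?thesis using d DERIV_deriv_iff_real_differentiable by metis
qed

lemma ldiff_intro:
  assumes "\<And>c z. \<exists>D. ((\<lambda>t. f (z(c := t))) has_real_derivative D) (at (z c))"
  shows "ldiff f"
  using assms unfolding ldiff_def real_differentiable_def by blast

lemma pd_eqI:
  assumes "\<And>z. ((\<lambda>t. f (z(c := t))) has_real_derivative g z) (at (z c))"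
  shows "pd c f = g"
proof
  fix z show "pd c f z = g z" unfolding pd_def using assms[of z] by (rule DERIV_imp_deriv)
qed

lemma ldiff_const: "ldiff (\<lambda>z. k)"
  by (rule ldiff_intro) (auto intro: derivative_eq_intros)

lemma pd_const: "pd c (\<lambda>z. k) = (\<lambda>z. 0)"
  by (rule pd_eqI) (auto intro: derivative_eq_intros)

lemma line_coord: "(\<lambda>t. (z(c := t)) d) = (if c = d then (\<lambda>t. t) else (\<lambda>t. z d))"
  by auto

lemma ldiff_coord: "ldiff (\<lambda>z. z d)"
proof (rule ldiff_intro)
  fix c and z :: "'a coord \<Rightarrow> real"
  show "\<exists>D. ((\<lambda>t. (z(c := t)) d) has_real_derivative D) (at (z c))"
    by (cases "c = d") (auto simp: line_coord intro: derivative_eq_intros)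
qed

lemma pd_coord: "pd c (\<lambda>z. z d) = (\<lambda>z. if c = d then 1 else 0)"
proof (rule pd_eqI)
  fix z :: "'a coord \<Rightarrow> real"
  show "((\<lambda>t. (z(c := t)) d) has_real_derivative (if c = d then 1 else 0)) (at (z c))"
    by (cases "c = d") (auto simp: line_coord intro: derivative_eq_intros)
qed

lemma ldiff_DERIV0:
  assumes "ldiff f"
  shows "((\<lambda>t. f (z(c := t))) has_real_derivative pd c f z) (at (z c))"
  using ldiff_DERIV[OF assms, of z c "z c"] by simp

lemma ldiff_add: "ldiff f \<Longrightarrow> ldiff g \<Longrightarrow> ldiff (\<lambda>z. f z + g z)"
  unfolding ldiff_def by auto

lemma ldiff_mult: "ldiff f \<Longrightarrow> ldiff g \<Longrightarrow> ldiff (\<lambda>z. f z * g z)"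
  unfolding ldiff_def by auto

lemma pd_add: "ldiff f \<Longrightarrow> ldiff g \<Longrightarrow> pd c (\<lambda>z. f z + g z) = (\<lambda>z. pd c f z + pd c g z)"
  by (rule pd_eqI) (auto intro!: derivative_eq_intros ldiff_DERIV0)

lemma pd_mult: "ldiff f \<Longrightarrow> ldiff g \<Longrightarrow> pd c (\<lambda>z. f z * g z) = (\<lambda>z. pd c f z * g z + f z * pd c g z)"
  by (rule pd_eqI) (auto intro!: derivative_eq_intros ldiff_DERIV0)

lemma ldiff_sum_list: fixes ps :: "('i dfun \<times> 'i dfun) list" shows "(\<And>p. p \<in> set ps \<Longrightarrow> ldiff (fst p) \<and> ldiff (snd p)) \<Longrightarrow>
   ldiff (\<lambda>z. \<Sum>p\<leftarrow>ps. fst p z * snd p z)"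
proof (induction ps)
  case Nil then show ?case by (simp add: ldiff_const)
next
  case (Cons p ps)
  have "ldiff (fst p)" "ldiff (snd p)" using Cons.prems by auto
  moreover have "ldiff (\<lambda>z. \<Sum>p\<leftarrow>ps. fst p z * snd p z)" using Cons by simp
  ultimately show ?case by (simp add: ldiff_add ldiff_mult)
qed

lemma cont_sum_list: fixes ps :: "('i dfun \<times> 'i dfun) list" shows "(\<And>p. p \<in> set ps \<Longrightarrow> continuous_on UNIV (fst p) \<and> continuous_on UNIV (snd p)) \<Longrightarrow>
   continuous_on UNIV (\<lambda>z. \<Sum>p\<leftarrow>ps. fst p z * snd p z)"
proof (induction ps)
  case Nil then show ?case by simp
next
  case (Cons p ps)
  have "continuous_on UNIV (fst p)" "continuous_on UNIV (snd p)" using Cons.prems by auto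
  moreover have "continuous_on UNIV (\<lambda>z. \<Sum>p\<leftarrow>ps. fst p z * snd p z)" using Cons by simp
  ultimately have "continuous_on UNIV (\<lambda>z. fst p z * snd p z + (\<Sum>p\<leftarrow>ps. fst p z * snd p z))"
    by (intro continuous_on_add continuous_on_mult') auto
  then show ?case by simp
qed

lemma pd_sum_list: fixes ps :: "('i dfun \<times> 'i dfun) list" shows "(\<And>p. p \<in> set ps \<Longrightarrow> ldiff (fst p) \<and> ldiff (snd p)) \<Longrightarrow>
   pd c (\<lambda>z. \<Sum>p\<leftarrow>ps. fst p z * snd p z) =
   (\<lambda>z. \<Sum>p\<leftarrow>concat (map (\<lambda>p. [(pd c (fst p), snd p), (fst p, pd c (snd p))]) ps). fst p z * snd p z)"
proof (induction ps)
  case Nil then show ?case by (simp add: pd_const)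
next
  case (Cons p ps)
  have l: "ldiff (\<lambda>z. \<Sum>p\<leftarrow>ps. fst p z * snd p z)" using Cons.prems by (intro ldiff_sum_list) auto
  have "pd c (\<lambda>z. \<Sum>p\<leftarrow>p#ps. fst p z * snd p z) = pd c (\<lambda>z. fst p z * snd p z + (\<Sum>p\<leftarrow>ps. fst p z * snd p z))"
    by simp
  also have "\<dots> = (\<lambda>z. pd c (\<lambda>z. fst p z * snd p z) z + pd c (\<lambda>z. \<Sum>p\<leftarrow>ps. fst p z * snd p z) z)"
    using Cons.prems l by (intro pd_add ldiff_mult) auto
  also have "\<dots> = (\<lambda>z. pd c (fst p) z * snd p z + fst p z * pd c (snd p) z + pd c (\<lambda>z. \<Sum>p\<leftarrow>ps. fst p z * snd p z) z)"
    using Cons.prems by (subst pd_mult) auto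
  finally show ?case using Cons by (simp add: add.assoc)
qed

lemma iterpd_Nil[simp]: "iterpd [] f = f" by (simp add: iterpd_def)
lemma iterpd_Cons[simp]: "iterpd (c#cs) f = pd c (iterpd cs f)" by (simp add: iterpd_def)
lemma iterpd_append: "iterpd (cs @ ds) f = iterpd cs (iterpd ds f)" by (simp add: iterpd_def)

lemma smooth_closed:
  assumes "h \<in> C" "\<And>g. g \<in> C \<Longrightarrow> RR g" "\<And>g c. g \<in> C \<Longrightarrow> pd c g \<in> C"
  shows "smooth h"
proof -
  have "iterpd cs h \<in> C" for cs by (induction cs) (use assms in auto)
  then show ?thesis using assms unfolding smooth_def by blast
qed

lemma smooth_RR: "smooth f \<Longrightarrow> RR f" unfolding smooth_def using iterpd_Nil by metis
lemma smooth_ldiff: "smooth f \<Longrightarrow> ldiff f" using smooth_RR RR_def by blast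
lemma smooth_cont: "smooth f \<Longrightarrow> continuous_on UNIV f" using smooth_RR RR_def by blast

lemma smooth_pd: "smooth f \<Longrightarrow> smooth (pd c f)"
  unfolding smooth_def by (metis iterpd_append iterpd_Cons iterpd_Nil)

lemma smooth_sum_list:
  assumes "\<And>p. p \<in> set ps \<Longrightarrow> smooth (fst p) \<and> smooth (snd p)"
  shows "smooth (\<lambda>z. \<Sum>p\<leftarrow>ps. fst p z * snd p z)"
proof (rule smooth_closed[where C="{h. \<exists>ps. (\<forall>p\<in>set ps. smooth (fst p) \<and> smooth (snd p)) \<and> h = (\<lambda>z. \<Sum>p\<leftarrow>ps. fst p z * snd p z)}"])
  show "(\<lambda>z. \<Sum>p\<leftarrow>ps. fst p z * snd p z) \<in> {h. \<exists>ps. (\<forall>p\<in>set ps. smooth (fst p) \<and> smooth (snd p)) \<and> h = (\<lambda>z. \<Sum>p\<leftarrow>ps. fst p z * snd p z)}" using assms by blast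
next
  fix g assume "g \<in> {h. \<exists>ps. (\<forall>p\<in>set ps. smooth (fst p) \<and> smooth (snd p)) \<and> h = (\<lambda>z. \<Sum>p\<leftarrow>ps. fst p z * snd p z)}"
  then obtain qs where q: "\<forall>p\<in>set qs. smooth (fst p) \<and> smooth (snd p)" and g: "g = (\<lambda>z. \<Sum>p\<leftarrow>qs. fst p z * snd p z)" by blast
  show "RR g" unfolding g RR_def
    apply (intro conjI cont_sum_list ldiff_sum_list)
    using q smooth_ldiff smooth_cont by auto
  fix c
  have "pd c g = (\<lambda>z. \<Sum>p\<leftarrow>concat (map (\<lambda>p. [(pd c (fst p), snd p), (fst p, pd c (snd p))]) qs). fst p z * snd p z)"
    unfolding g using q by (intro pd_sum_list) (auto intro: smooth_ldiff)
  moreover have "\<forall>p\<in>set (concat (map (\<lambda>p. [(pd c (fst p), snd p), (fst p, pd c (snd p))]) qs)). smooth (fst p) \<and> smooth (snd p)"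
    using q by (auto intro: smooth_pd)
  ultimately show "pd c g \<in> {h. \<exists>ps. (\<forall>p\<in>set ps. smooth (fst p) \<and> smooth (snd p)) \<and> h = (\<lambda>z. \<Sum>p\<leftarrow>ps. fst p z * snd p z)}"
    by blast
qed

lemma smooth_const: "smooth (\<lambda>z. k)"
  by (rule smooth_closed[where C="range (\<lambda>k z. k)"]) (auto simp: RR_def ldiff_const pd_const)

lemma smooth_coord: "smooth (\<lambda>z. z d)"
  by (rule smooth_closed[where C="insert (\<lambda>z. z d) (range (\<lambda>k z. k))"])
     (auto simp: RR_def ldiff_const pd_const ldiff_coord pd_coord)

lemma smooth_mult: "smooth f \<Longrightarrow> smooth g \<Longrightarrow> smooth (\<lambda>z. f z * g z)"
  using smooth_sum_list[of "[(f,g)]"] by simp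

lemma smooth_add: "smooth f \<Longrightarrow> smooth g \<Longrightarrow> smooth (\<lambda>z. f z + g z)"
proof -
  assume a: "smooth f" "smooth g"
  have "smooth (\<lambda>z. \<Sum>p\<leftarrow>[(f,\<lambda>z. 1),(g,\<lambda>z. 1)]. fst p z * snd p z)"
    by (rule smooth_sum_list) (use a smooth_const in auto)
  then show ?thesis by simp
qed

lemma smooth_cmult: "smooth f \<Longrightarrow> smooth (\<lambda>z. k * f z)"
  using smooth_mult[OF smooth_const] by blast

lemma smooth_uminus: "smooth f \<Longrightarrow> smooth (\<lambda>z. - f z)"
  using smooth_cmult[of f "-1"] by simp

lemma smooth_diff: "smooth f \<Longrightarrow> smooth g \<Longrightarrow> smooth (\<lambda>z. f z - g z)"
  using smooth_add[OF _ smooth_uminus] by simp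

lemma smooth_sum: "(\<And>a. a \<in> A \<Longrightarrow> smooth (F a)) \<Longrightarrow> smooth (\<lambda>z. \<Sum>a\<in>A. F a z)"
proof (induction A rule: infinite_finite_induct)
  case (infinite A) then show ?case by (simp add: smooth_const)
next
  case empty then show ?case by (simp add: smooth_const)
next
  case (insert x F) then show ?case by (simp add: smooth_add)
qed

lemma dep_mono: "dep S f \<Longrightarrow> S \<subseteq> T \<Longrightarrow> dep T f"
  unfolding dep_def by blast

lemma dep_const: "dep S (\<lambda>z. k)" unfolding dep_def by simp
lemma dep_coord: "d \<in> S \<Longrightarrow> dep S (\<lambda>z. z d)" unfolding dep_def by metis
lemma dep_add: "dep S f \<Longrightarrow> dep S g \<Longrightarrow> dep S (\<lambda>z. f z + g z)" unfolding dep_def by metis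
lemma dep_mult: "dep S f \<Longrightarrow> dep S g \<Longrightarrow> dep S (\<lambda>z. f z * g z)" unfolding dep_def by metis
lemma dep_diff: "dep S f \<Longrightarrow> dep S g \<Longrightarrow> dep S (\<lambda>z. f z - g z)" unfolding dep_def by metis
lemma dep_uminus: "dep S f \<Longrightarrow> dep S (\<lambda>z. - f z)" unfolding dep_def by metis
lemma dep_sum: "(\<And>a. a \<in> A \<Longrightarrow> dep S (F a)) \<Longrightarrow> dep S (\<lambda>z. \<Sum>a\<in>A. F a z)"
  unfolding dep_def by (intro allI impI sum.cong) auto

lemma pd_dep0: "dep S f \<Longrightarrow> c \<notin> S \<Longrightarrow> pd c f = (\<lambda>z. 0)"
proof -
  assume a: "dep S f" "c \<notin> S"
  have "(\<lambda>t. f (z(c := t))) = (\<lambda>t. f z)" for z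
  proof (intro ext)
    fix t
    have "\<forall>d\<in>S. (z(c := t)) d = z d" using a(2) by auto
    then show "f (z(c := t)) = f z" using a(1) unfolding dep_def by blast
  qed
  then show ?thesis unfolding pd_def by (simp add: DERIV_imp_deriv[OF DERIV_const])
qed

lemma dep_pd: "dep S f \<Longrightarrow> dep S (pd c f)"
proof (cases "c \<in> S")
  case True
  assume a: "dep S f"
  show ?thesis unfolding dep_def pd_def
  proof (intro allI impI)
    fix z w :: "'a jet" assume zw: "\<forall>d\<in>S. z d = w d"
    have "(\<lambda>t. f (z(c := t))) = (\<lambda>t. f (w(c := t)))"
      using a zw unfolding dep_def by (intro ext) auto
    then show "deriv (\<lambda>t. f (z(c := t))) (z c) = deriv (\<lambda>t. f (w(c := t))) (w c)"
      using zw True by simp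
  qed
next
  case False
  assume "dep S f" then show ?thesis using pd_dep0[OF _ False] dep_const by metis
qed

definition DD :: "'i dfun \<Rightarrow> bool" where "DD f \<longleftrightarrow> difffun f"



lemma mvt2d:
  fixes g gs gst :: "real \<Rightarrow> real \<Rightarrow> real"
  assumes ds: "\<And>s t. ((\<lambda>s. g s t) has_real_derivative gs s t) (at s)"
    and dst: "\<And>s t. ((\<lambda>t. gs s t) has_real_derivative gst s t) (at t)"
    and h: "h > 0"
  shows "\<exists>\<xi> \<eta>. a < \<xi> \<and> \<xi> < a + h \<and> b < \<eta> \<and> \<eta> < b + h \<and>
      g (a+h) (b+h) - g (a+h) b - g a (b+h) + g a b = h * h * gst \<xi> \<eta>"
proof -
  have "\<exists>\<xi>. a < \<xi> \<and> \<xi> < a + h \<and> (\<lambda>s. g s (b+h) - g s b) (a+h) - (\<lambda>s. g s (b+h) - g s b) a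
        = (a + h - a) * (gs \<xi> (b+h) - gs \<xi> b)"
    by (rule MVT2) (use h in \<open>auto intro!: derivative_eq_intros ds\<close>)
  then obtain \<xi> where x: "a < \<xi>" "\<xi> < a + h" and e1:
    "g (a+h) (b+h) - g (a+h) b - (g a (b+h) - g a b) = h * (gs \<xi> (b+h) - gs \<xi> b)" by auto
  have "\<exists>\<eta>. b < \<eta> \<and> \<eta> < b + h \<and> gs \<xi> (b+h) - gs \<xi> b = (b + h - b) * gst \<xi> \<eta>"
    by (rule MVT2) (use h dst in auto)
  then obtain \<eta> where y: "b < \<eta>" "\<eta> < b + h" and e2: "gs \<xi> (b+h) - gs \<xi> b = h * gst \<xi> \<eta>" by auto
  show ?thesis using x y e1 e2 by (intro exI[of _ \<xi>] exI[of _ \<eta>]) (auto simp: algebra_simps)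
qed

lemma seq_squeeze:
  fixes x :: "nat \<Rightarrow> real"
  assumes "\<And>n. a < x n \<and> x n < a + inverse (real (Suc n))"
  shows "x \<longlonglongrightarrow> a"
proof (rule tendsto_sandwich[of "\<lambda>n. a" _ _ "\<lambda>n. a + inverse (real (Suc n))"])
  show "\<forall>\<^sub>F n in sequentially. a \<le> x n" using assms by (intro always_eventually allI less_imp_le) auto
  show "\<forall>\<^sub>F n in sequentially. x n \<le> a + inverse (real (Suc n))" using assms by (intro always_eventually allI less_imp_le) auto
  show "(\<lambda>n. a) \<longlonglongrightarrow> a" by simp
  have "(\<lambda>n. inverse (real (Suc n))) \<longlonglongrightarrow> 0" using LIMSEQ_inverse_real_of_nat .
  then show "(\<lambda>n. a + inverse (real (Suc n))) \<longlonglongrightarrow> a" using tendsto_add[of "\<lambda>n. a" a] by fastforce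
qed

lemma cont_slice:
  assumes "continuous_on UNIV (M :: 'i dfun)"
  shows "continuous_on UNIV (\<lambda>p::real\<times>real. M (z(c := fst p, d := snd p)))"
proof -
  have "continuous_on UNIV (\<lambda>p::real\<times>real. z(c := fst p, d := snd p))"
  proof (intro continuous_on_coordinatewise_then_product)
    fix i
    have "(\<lambda>p::real\<times>real. (z(c := fst p, d := snd p)) i) = (\<lambda>p. if i = d then snd p else if i = c then fst p else z i)"
      by auto
    moreover have "continuous_on UNIV (\<lambda>p::real\<times>real. if i = d then snd p else if i = c then fst p else z i)"
      by (cases "i = d"; cases "i = c") (auto intro!: continuous_intros)
    ultimately show "continuous_on UNIV (\<lambda>p::real\<times>real. (z(c := fst p, d := snd p)) i)"
      by metis
  qed
  then show ?thesis using assms continuous_on_compose2 by blast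
qed

lemma schwarz:
  assumes sf: "smooth f"
  shows "pd c (pd d f) = pd d (pd c f)"
proof (cases "c = d")
  case True then show ?thesis by simp
next
  case cd: False
  show ?thesis
  proof
    fix z :: "'a jet"
    let ?M1 = "pd d (pd c f)" and ?M2 = "pd c (pd d f)"
    define g where "g s t = f (z(c := s, d := t))" for s t
    have upd1: "z(d := t, c := s) = z(c := s, d := t)" for s t using cd by (simp add: fun_upd_twist)
    have lf: "ldiff f" and lc: "ldiff (pd c f)" and ld: "ldiff (pd d f)"
      using sf by (auto intro: smooth_ldiff smooth_pd)
    have cM1: "continuous_on UNIV ?M1" and cM2: "continuous_on UNIV ?M2"
      using sf by (auto intro!: smooth_cont smooth_pd)
    have D1: "((\<lambda>s. g s t) has_real_derivative pd c f (z(c := s, d := t))) (at s)" for s t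
      using ldiff_DERIV[OF lf, of "z(d := t)" c s] unfolding g_def by (simp add: upd1)
    have D2: "((\<lambda>t. g s t) has_real_derivative pd d f (z(c := s, d := t))) (at t)" for s t
      using ldiff_DERIV[OF lf, of "z(c := s)" d t] unfolding g_def by simp
    have D3: "((\<lambda>t. pd c f (z(c := s, d := t))) has_real_derivative ?M1 (z(c := s, d := t))) (at t)" for s t
      using ldiff_DERIV[OF lc, of "z(c := s)" d t] by simp
    have D4: "((\<lambda>s. pd d f (z(c := s, d := t))) has_real_derivative ?M2 (z(c := s, d := t))) (at s)" for s t
      using ldiff_DERIV[OF ld, of "z(d := t)" c s] by (simp add: upd1)
    let ?a = "z c" and ?b = "z d"
    have "\<exists>q. ?a < fst q \<and> fst q < ?a + inverse (real (Suc n)) \<and> ?b < fst (snd q) \<and> fst (snd q) < ?b + inverse (real (Suc n))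
       \<and> ?b < fst (snd (snd q)) \<and> fst (snd (snd q)) < ?b + inverse (real (Suc n))
       \<and> ?a < snd (snd (snd q)) \<and> snd (snd (snd q)) < ?a + inverse (real (Suc n))
       \<and> ?M1 (z(c := fst q, d := fst (snd q))) = ?M2 (z(c := snd (snd (snd q)), d := fst (snd (snd q))))" for n
    proof -
      define h where "h = inverse (real (Suc n))"
      have h: "h > 0" unfolding h_def by simp
      obtain \<xi> \<eta> where 1: "?a < \<xi>" "\<xi> < ?a + h" "?b < \<eta>" "\<eta> < ?b + h"
        and e1: "g (?a+h) (?b+h) - g (?a+h) ?b - g ?a (?b+h) + g ?a ?b = h * h * ?M1 (z(c := \<xi>, d := \<eta>))"
        using mvt2d[where g=g and gs="\<lambda>s t. pd c f (z(c := s, d := t))" and gst="\<lambda>s t. ?M1 (z(c := s, d := t))",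
            OF D1 D3 h, of ?a ?b] by blast
      obtain \<eta>' \<xi>' where 2: "?b < \<eta>'" "\<eta>' < ?b + h" "?a < \<xi>'" "\<xi>' < ?a + h"
        and e2: "g (?a+h) (?b+h) - g ?a (?b+h) - g (?a+h) ?b + g ?a ?b = h * h * ?M2 (z(c := \<xi>', d := \<eta>'))"
        using mvt2d[where g="\<lambda>t s. g s t" and gs="\<lambda>t s. pd d f (z(c := s, d := t))" and gst="\<lambda>t s. ?M2 (z(c := s, d := t))",
            OF D2 D4 h, of ?b ?a] by blast
      have "?M1 (z(c := \<xi>, d := \<eta>)) = ?M2 (z(c := \<xi>', d := \<eta>'))"
        using e1 e2 h by (simp add: algebra_simps)
      then show ?thesis using 1 2 unfolding h_def by (intro exI[of _ "(\<xi>, \<eta>, \<eta>', \<xi>')"]) auto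
    qed
    then obtain Q where Q: "\<And>n. ?a < fst (Q n) \<and> fst (Q n) < ?a + inverse (real (Suc n)) \<and> ?b < fst (snd (Q n)) \<and> fst (snd (Q n)) < ?b + inverse (real (Suc n))
       \<and> ?b < fst (snd (snd (Q n))) \<and> fst (snd (snd (Q n))) < ?b + inverse (real (Suc n))
       \<and> ?a < snd (snd (snd (Q n))) \<and> snd (snd (snd (Q n))) < ?a + inverse (real (Suc n))
       \<and> ?M1 (z(c := fst (Q n), d := fst (snd (Q n)))) = ?M2 (z(c := snd (snd (snd (Q n))), d := fst (snd (snd (Q n)))))"
      by metis
    have t1: "(\<lambda>n. (fst (Q n), fst (snd (Q n)))) \<longlonglongrightarrow> (?a, ?b)"
      by (intro tendsto_Pair seq_squeeze) (use Q in auto)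
    have t2: "(\<lambda>n. (snd (snd (snd (Q n))), fst (snd (snd (Q n))))) \<longlonglongrightarrow> (?a, ?b)"
      by (intro tendsto_Pair seq_squeeze) (use Q in auto)
    have l1: "(\<lambda>n. ?M1 (z(c := fst (Q n), d := fst (snd (Q n))))) \<longlonglongrightarrow> ?M1 (z(c := ?a, d := ?b))"
      using continuous_on_tendsto_compose[OF cont_slice[OF cM1, of z c d] t1] by simp
    have l2: "(\<lambda>n. ?M2 (z(c := snd (snd (snd (Q n))), d := fst (snd (snd (Q n)))))) \<longlonglongrightarrow> ?M2 (z(c := ?a, d := ?b))"
      using continuous_on_tendsto_compose[OF cont_slice[OF cM2, of z c d] t2] by simp
    have "?M1 (z(c := ?a, d := ?b)) = ?M2 (z(c := ?a, d := ?b))"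
      using LIMSEQ_unique[OF l1] l2 Q by simp
    then show "?M2 z = ?M1 z" by simp
  qed
qed



lemma ldiff_uminus: "ldiff f \<Longrightarrow> ldiff (\<lambda>z. - f z)" unfolding ldiff_def by auto
lemma ldiff_diff: "ldiff f \<Longrightarrow> ldiff g \<Longrightarrow> ldiff (\<lambda>z. f z - g z)" unfolding ldiff_def by auto
lemma ldiff_sum: "(\<And>a. a \<in> A \<Longrightarrow> ldiff (F a)) \<Longrightarrow> ldiff (\<lambda>z. \<Sum>a\<in>A. F a z)"
proof (induction A rule: infinite_finite_induct)
  case (insert x F) then show ?case by (simp add: ldiff_add)
qed (auto simp: ldiff_const)

lemma pd_uminus: "ldiff f \<Longrightarrow> pd c (\<lambda>z. - f z) = (\<lambda>z. - pd c f z)"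
  by (rule pd_eqI) (auto intro!: derivative_eq_intros ldiff_DERIV0)
lemma pd_diff: "ldiff f \<Longrightarrow> ldiff g \<Longrightarrow> pd c (\<lambda>z. f z - g z) = (\<lambda>z. pd c f z - pd c g z)"
  by (rule pd_eqI) (auto intro!: derivative_eq_intros ldiff_DERIV0)
lemma pd_cmult: "ldiff f \<Longrightarrow> pd c (\<lambda>z. k * f z) = (\<lambda>z. k * pd c f z)"
  by (rule pd_eqI) (auto intro!: derivative_eq_intros ldiff_DERIV0)
lemma pd_sum: "(\<And>a. a \<in> A \<Longrightarrow> ldiff (F a)) \<Longrightarrow> pd c (\<lambda>z. \<Sum>a\<in>A. F a z) = (\<lambda>z. \<Sum>a\<in>A. pd c (F a) z)"
proof (induction A rule: infinite_finite_induct)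
  case (infinite A) then show ?case by (simp add: pd_const)
next
  case empty then show ?case by (simp add: pd_const)
next
  case (insert x F)
  then show ?case by (simp add: pd_add ldiff_sum)
qed

lemma smooth_sumI: "(\<And>a. a \<in> A \<Longrightarrow> smooth (F a)) \<Longrightarrow> smooth (\<lambda>z. \<Sum>a\<in>A. F a z)" by (rule smooth_sum)

section \<open>Differential functions\<close>

lemma D_smooth: "difffun f \<Longrightarrow> smooth f" using difffun_iff by blast
lemma D_ldiff: "difffun f \<Longrightarrow> ldiff f" using difffun_iff smooth_ldiff by blast
lemma D_dep: "difffun f \<Longrightarrow> \<exists>S. finite S \<and> dep S f" using difffun_iff by blast

lemma D_intro: "finite S \<Longrightarrow> dep S f \<Longrightarrow> smooth f \<Longrightarrow> difffun f" unfolding difffun_iff by blast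

lemma D_const[simp, intro]: "difffun (\<lambda>z. k)"
  by (rule D_intro[of "{}"]) (auto simp: smooth_const dep_const)
lemma D_zero[simp, intro]: "difffun (\<lambda>z. 0)" by (rule D_const)
lemma D_coord[simp, intro]: "difffun (\<lambda>z. z d)"
  by (rule D_intro[of "{d}"]) (auto simp: smooth_coord dep_coord)
lemma D_binop:
  assumes "difffun f" "difffun g" "\<And>S. dep S f \<Longrightarrow> dep S g \<Longrightarrow> dep S h"
    "smooth f \<Longrightarrow> smooth g \<Longrightarrow> smooth h"
  shows "difffun h"
proof -
  obtain S1 S2 where "finite S1" "dep S1 f" "finite S2" "dep S2 g" using assms(1,2) D_dep by metis
  then have "dep (S1 \<union> S2) f" "dep (S1 \<union> S2) g" using dep_mono by blast+
  then show ?thesis using assms \<open>finite S1\<close> \<open>finite S2\<close> D_smooth by (intro D_intro[of "S1 \<union> S2"]) auto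
qed
lemma D_add[intro]: "difffun f \<Longrightarrow> difffun g \<Longrightarrow> difffun (\<lambda>z. f z + g z)"
  by (rule D_binop[of f g]) (auto intro: dep_add smooth_add)
lemma D_mult[intro]: "difffun f \<Longrightarrow> difffun g \<Longrightarrow> difffun (\<lambda>z. f z * g z)"
  by (rule D_binop[of f g]) (auto intro: dep_mult smooth_mult)
lemma D_diff[intro]: "difffun f \<Longrightarrow> difffun g \<Longrightarrow> difffun (\<lambda>z. f z - g z)"
  by (rule D_binop[of f g]) (auto intro: dep_diff smooth_diff)
lemma D_uminus[intro]: "difffun f \<Longrightarrow> difffun (\<lambda>z. - f z)"
  by (rule D_binop[of f f]) (auto intro: dep_uminus smooth_uminus)
lemma D_pd[intro]: "difffun f \<Longrightarrow> difffun (pd c f)"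
  by (rule D_binop[of f f]) (auto intro: dep_pd smooth_pd)
lemma D_sum[intro]: "(\<And>a. a \<in> A \<Longrightarrow> difffun (F a)) \<Longrightarrow> difffun (\<lambda>z. \<Sum>a\<in>A. F a z)"
proof (induction A rule: infinite_finite_induct)
  case (infinite A) then show ?case by simp
next
  case empty then show ?case by simp
next
  case (insert x F) then show ?case by (simp add: D_add)
qed
lemma D_cmult[intro]: "difffun f \<Longrightarrow> difffun (\<lambda>z. k * f z)" using D_mult[OF D_const] by blast

section \<open>Multi-indices\<close>

definition inc :: "'i \<Rightarrow> ('i \<Rightarrow> nat) \<Rightarrow> ('i \<Rightarrow> nat)" where "inc i J = J(i := Suc (J i))"
definition dec :: "'i \<Rightarrow> ('i \<Rightarrow> nat) \<Rightarrow> ('i \<Rightarrow> nat)" where "dec i J = J(i := J i - 1)"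

lemma dec_inc[simp]: "dec i (inc i J) = J" unfolding dec_def inc_def by auto
lemma inc_dec[simp]: "0 < J i \<Longrightarrow> inc i (dec i J) = J" unfolding dec_def inc_def by auto
lemma inc_inj: "inc i J = inc i K \<longleftrightarrow> J = K" by (metis dec_inc)
lemma inc_pos[simp]: "0 < inc i J i" unfolding inc_def by simp
lemma inc_comm: "inc i (inc j J) = inc j (inc i J)" unfolding inc_def by (auto simp: fun_eq_iff)

lemma mlen_inc: "mlen (inc i (J::'i::finite \<Rightarrow> nat)) = Suc (mlen J)"
proof -
  have "mlen (inc i J) = (\<Sum>j\<in>UNIV. J j + (if j = i then 1 else 0))"
    unfolding mlen_def inc_def by (intro sum.cong) auto
  also have "\<dots> = mlen J + 1" unfolding mlen_def by (simp add: sum.distrib)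
  finally show ?thesis by simp
qed

lemma mlen_0_iff: "mlen (J::'i::finite \<Rightarrow> nat) = 0 \<longleftrightarrow> J = (\<lambda>i. 0)"
proof
  assume "mlen J = 0"
  then have "\<forall>i\<in>UNIV. J i = 0" unfolding mlen_def by (simp add: sum_eq_0_iff)
  then show "J = (\<lambda>i. 0)" by auto
qed (simp add: mlen_def)

lemma mlen_pos_ex: "mlen (J::'i::finite \<Rightarrow> nat) = Suc k \<Longrightarrow> \<exists>i. 0 < J i"
proof (rule ccontr)
  assume "mlen J = Suc k" "\<not> (\<exists>i. 0 < J i)"
  then have "J = (\<lambda>i. 0)" by auto
  then have "mlen J = 0" by (simp add: mlen_def)
  then show False using \<open>mlen J = Suc k\<close> by simp
qed

lemma mlen_dec: "0 < J i \<Longrightarrow> mlen (dec i (J::'i::finite \<Rightarrow> nat)) = mlen J - 1"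
  using mlen_inc[of i "dec i J"] by simp

definition AN :: "nat \<Rightarrow> ('i::finite \<Rightarrow> nat) set" where "AN N = {J. mlen J \<le> N}"

lemma finite_AN[simp, intro]: "finite (AN N :: ('i::finite \<Rightarrow> nat) set)"
proof -
  have "AN N \<subseteq> {J::'i \<Rightarrow> nat. \<forall>i. J i \<in> {..N}}"
  proof
    fix J :: "'i \<Rightarrow> nat" assume "J \<in> AN N"
    then have "mlen J \<le> N" unfolding AN_def by simp
    moreover have "J i \<le> mlen J" for i unfolding mlen_def by (rule member_le_sum) auto
    ultimately have "\<forall>i. J i \<le> N" using le_trans by blast
    then show "J \<in> {J::'i \<Rightarrow> nat. \<forall>i. J i \<in> {..N}}" by auto
  qed
  moreover have "{J::'i \<Rightarrow> nat. \<forall>i. J i \<in> {..N}} = PiE UNIV (\<lambda>_. {..N})" by (auto simp: PiE_def Pi_def)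
  moreover have "finite (PiE (UNIV::'i set) (\<lambda>_. {..N}))" by (intro finite_PiE) auto
  ultimately show ?thesis using finite_subset by metis
qed

lemma AN_mono: "N \<le> M \<Longrightarrow> AN N \<subseteq> AN M" unfolding AN_def by auto



definition ordle :: "nat \<Rightarrow> ('i::finite) dfun \<Rightarrow> bool" where
  "ordle N f \<longleftrightarrow> (\<forall>J. N < mlen J \<longrightarrow> pd (U J) f = (\<lambda>z. 0))"

lemma ordleD: "ordle N f \<Longrightarrow> N < mlen J \<Longrightarrow> pd (U J) f = (\<lambda>z. 0)" unfolding ordle_def by blast
lemma ordleD': "ordle N f \<Longrightarrow> J \<notin> AN N \<Longrightarrow> pd (U J) f z = 0" unfolding ordle_def AN_def by auto

lemma ordle_mono: "ordle N f \<Longrightarrow> N \<le> M \<Longrightarrow> ordle M f" unfolding ordle_def by auto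

lemma D_ordle: assumes "difffun (f::'i::finite dfun)" shows "\<exists>N. ordle N f"
proof -
  obtain S where S: "finite S" "dep S f" using assms D_dep by blast
  have fin: "finite (U -` S)" using S(1) by (rule finite_vimageI) (simp add: inj_def)
  define N where "N = Max (mlen ` (U -` S))"
  have "ordle N f" unfolding ordle_def
  proof (intro allI impI)
    fix J :: "'i \<Rightarrow> nat" assume "N < mlen J"
    then have "U J \<notin> S" unfolding N_def using fin by (metis Max_ge finite_imageI image_eqI leD vimageI)
    then show "pd (U J) f = (\<lambda>z. 0)" using pd_dep0[OF S(2)] by blast
  qed
  then show ?thesis by blast
qed

lemma ordle_const: "ordle N (\<lambda>z. k)" unfolding ordle_def by (simp add: pd_const)
lemma ordle_coordX: "ordle N (\<lambda>z. z (X j))" unfolding ordle_def by (simp add: pd_coord)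
lemma ordle_coordU: "mlen K \<le> N \<Longrightarrow> ordle N (\<lambda>z. z (U K))" unfolding ordle_def by (auto simp: pd_coord)
lemma ordle_add: "ordle N f \<Longrightarrow> ordle N g \<Longrightarrow> ldiff f \<Longrightarrow> ldiff g \<Longrightarrow> ordle N (\<lambda>z. f z + g z)"
  unfolding ordle_def by (simp add: pd_add)
lemma ordle_diff: "ordle N f \<Longrightarrow> ordle N g \<Longrightarrow> ldiff f \<Longrightarrow> ldiff g \<Longrightarrow> ordle N (\<lambda>z. f z - g z)"
  unfolding ordle_def by (simp add: pd_diff)
lemma ordle_uminus: "ordle N f \<Longrightarrow> ldiff f \<Longrightarrow> ordle N (\<lambda>z. - f z)"
  unfolding ordle_def by (simp add: pd_uminus)
lemma ordle_mult: "ordle N f \<Longrightarrow> ordle N g \<Longrightarrow> ldiff f \<Longrightarrow> ldiff g \<Longrightarrow> ordle N (\<lambda>z. f z * g z)"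
  unfolding ordle_def by (simp add: pd_mult)
lemma ordle_sum: "(\<And>a. a \<in> A \<Longrightarrow> ordle N (F a)) \<Longrightarrow> (\<And>a. a \<in> A \<Longrightarrow> ldiff (F a)) \<Longrightarrow>
   ordle N (\<lambda>z. \<Sum>a\<in>A. F a z)"
  unfolding ordle_def by (simp add: pd_sum)
lemma ordle_pd: "ordle N f \<Longrightarrow> smooth f \<Longrightarrow> ordle N (pd c f)"
  unfolding ordle_def by (simp add: schwarz pd_const)

lemma D_ordle2: "difffun f \<Longrightarrow> difffun g \<Longrightarrow> \<exists>N. ordle N f \<and> ordle N g"
  by (metis D_ordle nat_le_linear ordle_mono)

section \<open>Total derivative\<close>

definition Jset :: "('i::finite) dfun \<Rightarrow> ('i \<Rightarrow> nat) set" where "Jset f = {J. pd (U J) f \<noteq> (\<lambda>z. 0)}"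

lemma Jset_AN: "ordle N f \<Longrightarrow> Jset f \<subseteq> AN N"
  unfolding Jset_def ordle_def AN_def by (auto simp: not_le)

lemma sum_ext_zero:
  assumes "finite B" "A \<subseteq> B" "\<And>x. x \<in> B \<Longrightarrow> x \<notin> A \<Longrightarrow> g x = 0"
  shows "sum g A = sum g B"
  by (rule sum.mono_neutral_left) (use assms in auto)

lemma Dtot_alt:
  assumes "ordle N f"
  shows "Dtot i f = (\<lambda>z. pd (X i) f z + (\<Sum>J\<in>AN N. z (U (inc i J)) * pd (U J) f z))"
proof
  fix z
  have "(\<Sum>J | pd (U J) f \<noteq> (\<lambda>z. 0). z (U (J(i := J i + 1))) * pd (U J) f z)
      = (\<Sum>J\<in>Jset f. z (U (inc i J)) * pd (U J) f z)" by (simp add: Jset_def inc_def)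
  also have "\<dots> = (\<Sum>J\<in>AN N. z (U (inc i J)) * pd (U J) f z)"
    by (rule sum_ext_zero) (use Jset_AN[OF assms] in \<open>auto simp: Jset_def\<close>)
  finally show "Dtot i f z = pd (X i) f z + (\<Sum>J\<in>AN N. z (U (inc i J)) * pd (U J) f z)"
    unfolding Dtot_def by simp
qed

lemma D_Dtot[intro]: fixes f :: "('i::finite) dfun" assumes "difffun f" shows "difffun (Dtot i f)"
proof -
  obtain N where "ordle N f" using D_ordle assms by blast
  then show ?thesis using assms by (auto simp: Dtot_alt intro!: D_add D_sum D_mult D_pd)
qed

lemma Dtot_zero[simp]: "Dtot i (\<lambda>z. 0) = (\<lambda>z. 0)"
  by (simp add: Dtot_def pd_const)
lemma Dtot_const: "Dtot i (\<lambda>z. k) = (\<lambda>z. 0)"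
  by (simp add: Dtot_def pd_const)

lemma Dtot_add:
  fixes f g :: "('i::finite) dfun"
  assumes "difffun f" "difffun g"
  shows "Dtot i (\<lambda>z. f z + g z) = (\<lambda>z. Dtot i f z + Dtot i g z)"
proof -
  obtain N where N: "ordle N f" "ordle N g" using D_ordle2 assms by blast
  have l: "ldiff f" "ldiff g" using assms D_ldiff by auto
  have "ordle N (\<lambda>z. f z + g z)" using N l by (rule ordle_add)
  then show ?thesis using N l
    by (simp add: Dtot_alt pd_add algebra_simps sum.distrib)
qed

lemma Dtot_mult:
  fixes f g :: "('i::finite) dfun"
  assumes "difffun f" "difffun g"
  shows "Dtot i (\<lambda>z. f z * g z) = (\<lambda>z. Dtot i f z * g z + f z * Dtot i g z)"
proof -
  obtain N where N: "ordle N f" "ordle N g" using D_ordle2 assms by blast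
  have l: "ldiff f" "ldiff g" using assms D_ldiff by auto
  have "ordle N (\<lambda>z. f z * g z)" using N l by (rule ordle_mult)
  then show ?thesis using N l
    by (simp add: Dtot_alt pd_mult algebra_simps sum.distrib sum_distrib_left sum_distrib_right)
qed

lemma Dtot_cmult:
  fixes f g :: "('i::finite) dfun"
  assumes "difffun f"
  shows "Dtot i (\<lambda>z. k * f z) = (\<lambda>z. k * Dtot i f z)"
  using Dtot_mult[OF D_const assms, of i k] by (simp add: Dtot_const)

lemma Dtot_uminus:
  fixes f g :: "('i::finite) dfun"
  assumes "difffun f"
  shows "Dtot i (\<lambda>z. - f z) = (\<lambda>z. - Dtot i f z)"
  using Dtot_cmult[OF assms, of i "-1"] by simp

lemma Dtot_diff:
  fixes f g :: "('i::finite) dfun"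
  assumes "difffun f" "difffun g"
  shows "Dtot i (\<lambda>z. f z - g z) = (\<lambda>z. Dtot i f z - Dtot i g z)"
  using Dtot_add[OF assms(1) D_uminus[OF assms(2)], of i] Dtot_uminus[OF assms(2), of i] by simp

lemma Dtot_sum:
  fixes F :: "'a \<Rightarrow> ('i::finite) dfun"
  assumes "\<And>a. a \<in> A \<Longrightarrow> difffun (F a)"
  shows "Dtot i (\<lambda>z. \<Sum>a\<in>A. F a z) = (\<lambda>z. \<Sum>a\<in>A. Dtot i (F a) z)"
  using assms
proof (induction A rule: infinite_finite_induct)
  case (insert x A)
  then show ?case by (simp add: Dtot_add D_sum)
qed auto

lemma Dtot_coordU: "Dtot i (\<lambda>z. z (U (K::'i::finite\<Rightarrow>nat))) = (\<lambda>z. z (U (inc i K)))"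
proof -
  have "ordle (mlen K) (\<lambda>z. z (U K))" by (rule ordle_coordU) simp
  then have "Dtot i (\<lambda>z. z (U K)) = (\<lambda>z. pd (X i) (\<lambda>z. z (U K)) z + (\<Sum>J\<in>AN (mlen K). z (U (inc i J)) * pd (U J) (\<lambda>z. z (U K)) z))"
    by (rule Dtot_alt)
  also have "\<dots> = (\<lambda>z. z (U (inc i K)))"
  proof
    fix z
    have "(\<Sum>J\<in>AN (mlen K). z (U (inc i J)) * pd (U J) (\<lambda>z. z (U K)) z) = (\<Sum>J\<in>AN (mlen K). if J = K then z (U (inc i J)) else 0)"
      by (intro sum.cong) (auto simp: pd_coord)
    also have "\<dots> = z (U (inc i K))" using sum.delta[OF finite_AN[of "mlen K"], of K "\<lambda>J. z (U (inc i J))"]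
      by (auto simp: AN_def)
    finally show "pd (X i) (\<lambda>z. z (U K)) z + (\<Sum>J\<in>AN (mlen K). z (U (inc i J)) * pd (U J) (\<lambda>z. z (U K)) z) = z (U (inc i K))"
      by (simp add: pd_coord)
  qed
  finally show ?thesis .
qed

lemma Dtot_coordX: "Dtot i (\<lambda>z. z (X (j::'i::finite))) = (\<lambda>z. if i = j then 1 else 0)"
  by (simp add: Dtot_alt[OF ordle_coordX[of 0]] pd_coord)



lemma inc_nz[simp]: "inc i J i \<noteq> 0" unfolding inc_def by simp

lemma inc_eq_iff: "K = inc i J \<longleftrightarrow> 0 < K i \<and> J = dec i K"
  by (metis dec_inc inc_dec inc_pos)

lemma delta_inc:
  "(\<Sum>J\<in>AN N. if K = inc i J then F J else 0) = (if 0 < K i \<and> dec i K \<in> AN N then F (dec i K) else (0::real))"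
proof -
  have "(\<Sum>J\<in>AN N. if K = inc i J then F J else 0) = (\<Sum>J\<in>AN N. if J = dec i K then (if 0 < K i then F J else 0) else 0)"
    by (intro sum.cong) (auto simp: inc_eq_iff)
  also have "\<dots> = (if dec i K \<in> AN N then (if 0 < K i then F (dec i K) else 0) else 0)"
    by (rule sum.delta[OF finite_AN])
  finally show ?thesis by auto
qed

lemma ldiff_Dtot_alt_parts:
  assumes "difffun h"
  shows "ldiff (\<lambda>z. \<Sum>J\<in>AN N. z (U (inc i J)) * pd (U J) h z)"
  using assms by (intro ldiff_sum ldiff_mult ldiff_coord D_ldiff D_pd)

lemma pdU_Dtot:
  fixes h :: "('i::finite) dfun"
  assumes h: "difffun h"
  shows "pd (U K) (Dtot i h) = (\<lambda>z. Dtot i (pd (U K) h) z + (if 0 < K i then pd (U (dec i K)) h z else 0))"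
proof
  fix z
  obtain N where N: "ordle N h" using D_ordle h by blast
  have sh: "smooth h" using h D_smooth by blast
  have N': "ordle N (pd (U K) h)" using ordle_pd[OF N sh] .
  have "pd (U K) (Dtot i h) = pd (U K) (\<lambda>z. pd (X i) h z + (\<Sum>J\<in>AN N. z (U (inc i J)) * pd (U J) h z))"
    by (simp add: Dtot_alt[OF N])
  also have "\<dots> = (\<lambda>z. pd (U K) (pd (X i) h) z + pd (U K) (\<lambda>z. \<Sum>J\<in>AN N. z (U (inc i J)) * pd (U J) h z) z)"
    using h by (intro pd_add ldiff_Dtot_alt_parts D_ldiff D_pd)
  also have "pd (U K) (\<lambda>z. \<Sum>J\<in>AN N. z (U (inc i J)) * pd (U J) h z)
      = (\<lambda>z. \<Sum>J\<in>AN N. pd (U K) (\<lambda>z. z (U (inc i J)) * pd (U J) h z) z)"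
    using h by (intro pd_sum ldiff_mult ldiff_coord D_ldiff D_pd)
  also have "\<dots> = (\<lambda>z. \<Sum>J\<in>AN N. (if K = inc i J then 1 else 0) * pd (U J) h z + z (U (inc i J)) * pd (U J) (pd (U K) h) z)"
    using h by (simp add: pd_mult ldiff_coord D_ldiff D_pd pd_coord schwarz[OF sh])
  finally have "pd (U K) (Dtot i h) z = pd (X i) (pd (U K) h) z +
      ((\<Sum>J\<in>AN N. (if K = inc i J then 1 else 0) * pd (U J) h z) + (\<Sum>J\<in>AN N. z (U (inc i J)) * pd (U J) (pd (U K) h) z))"
    by (simp add: schwarz[OF sh] sum.distrib)
  also have "(\<Sum>J\<in>AN N. (if K = inc i J then 1 else 0) * pd (U J) h z) = (\<Sum>J\<in>AN N. if K = inc i J then pd (U J) h z else 0)"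
    by (intro sum.cong) auto
  also have "\<dots> = (if 0 < K i then pd (U (dec i K)) h z else 0)"
    using ordleD'[OF N, of "dec i K" z] by (simp add: delta_inc)
  finally show "pd (U K) (Dtot i h) z = Dtot i (pd (U K) h) z + (if 0 < K i then pd (U (dec i K)) h z else 0)"
    by (simp add: Dtot_alt[OF N'])
qed

lemma pdX_Dtot:
  fixes h :: "('i::finite) dfun"
  assumes h: "difffun h"
  shows "pd (X j) (Dtot i h) = Dtot i (pd (X j) h)"
proof
  fix z
  obtain N where N: "ordle N h" using D_ordle h by blast
  have sh: "smooth h" using h D_smooth by blast
  have N': "ordle N (pd (X j) h)" using ordle_pd[OF N sh] .
  have "pd (X j) (Dtot i h) = pd (X j) (\<lambda>z. pd (X i) h z + (\<Sum>J\<in>AN N. z (U (inc i J)) * pd (U J) h z))"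
    by (simp add: Dtot_alt[OF N])
  also have "\<dots> = (\<lambda>z. pd (X j) (pd (X i) h) z + pd (X j) (\<lambda>z. \<Sum>J\<in>AN N. z (U (inc i J)) * pd (U J) h z) z)"
    using h by (intro pd_add ldiff_Dtot_alt_parts D_ldiff D_pd)
  also have "pd (X j) (\<lambda>z. \<Sum>J\<in>AN N. z (U (inc i J)) * pd (U J) h z)
      = (\<lambda>z. \<Sum>J\<in>AN N. pd (X j) (\<lambda>z. z (U (inc i J)) * pd (U J) h z) z)"
    using h by (intro pd_sum ldiff_mult ldiff_coord D_ldiff D_pd)
  also have "\<dots> = (\<lambda>z. \<Sum>J\<in>AN N. z (U (inc i J)) * pd (U J) (pd (X j) h) z)"
    using h by (simp add: pd_mult ldiff_coord D_ldiff D_pd pd_coord schwarz[OF sh])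
  finally show "pd (X j) (Dtot i h) z = Dtot i (pd (X j) h) z"
    by (simp add: Dtot_alt[OF N'] schwarz[OF sh])
qed

lemma ordle_Dtot:
  fixes h :: "('i::finite) dfun"
  assumes h: "difffun h" and N: "ordle N h"
  shows "ordle (Suc N) (Dtot i h)"
  unfolding ordle_def
proof (intro allI impI)
  fix K :: "'i \<Rightarrow> nat" assume K: "Suc N < mlen K"
  have "pd (U K) h = (\<lambda>z. 0)" using ordleD[OF N] K by simp
  moreover have "0 < K i \<Longrightarrow> pd (U (dec i K)) h = (\<lambda>z. 0)" using ordleD[OF N, of "dec i K"] K mlen_dec[of K i] by simp
  ultimately show "pd (U K) (Dtot i h) = (\<lambda>z. 0)" by (cases "0 < K i") (simp_all add: pdU_Dtot[OF h])
qed

lemma shift_sum: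
  fixes F :: "('i \<Rightarrow> nat) \<Rightarrow> ('i \<Rightarrow> nat) \<Rightarrow> real"
  assumes "inc j ` A \<subseteq> B" "finite B"
    and "\<And>K. K \<in> B \<Longrightarrow> 0 < K j \<Longrightarrow> dec j K \<notin> A \<Longrightarrow> F K (dec j K) = 0"
  shows "(\<Sum>K\<in>B. if 0 < K j then F K (dec j K) else 0) = (\<Sum>M\<in>A. F (inc j M) M)"
proof -
  have "(\<Sum>M\<in>A. F (inc j M) M) = (\<Sum>K\<in>inc j ` A. F K (dec j K))"
    by (subst sum.reindex) (auto simp: inj_on_def inc_inj)
  also have "\<dots> = (\<Sum>K\<in>B. if K \<in> inc j ` A then F K (dec j K) else 0)"
    using assms(1,2) by (simp add: sum.inter_restrict[symmetric] Int_absorb1)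
  also have "\<dots> = (\<Sum>K\<in>B. if 0 < K j then F K (dec j K) else 0)"
  proof (intro sum.cong refl)
    fix K assume "K \<in> B"
    show "(if K \<in> inc j ` A then F K (dec j K) else 0) = (if 0 < K j then F K (dec j K) else 0)"
    proof (cases "K \<in> inc j ` A")
      case True then show ?thesis by auto
    next
      case False
      show ?thesis
      proof (cases "0 < K j")
        case True
        then have "dec j K \<notin> A" using False by (metis image_eqI inc_dec)
        then show ?thesis using assms(3) \<open>K \<in> B\<close> True False by simp
      qed (use False in simp)
    qed
  qed
  finally show ?thesis by simp
qed

lemma inc_AN: "inc j ` AN N \<subseteq> AN (Suc N)" unfolding AN_def by (auto simp: mlen_inc)



definition Phi :: "('i::finite) dfun \<Rightarrow> nat \<Rightarrow> 'i \<Rightarrow> 'i \<Rightarrow> 'i jet \<Rightarrow> real" where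
  "Phi h N i j z = pd (X j) (pd (X i) h) z
    + ((\<Sum>L\<in>AN (Suc N). z (U (inc j L)) * pd (X i) (pd (U L) h) z) + (\<Sum>K\<in>AN (Suc N). z (U (inc i K)) * pd (X j) (pd (U K) h) z))
    + (\<Sum>K\<in>AN (Suc N). \<Sum>L\<in>AN (Suc N). z (U (inc i K)) * z (U (inc j L)) * pd (U L) (pd (U K) h) z)
    + (\<Sum>M\<in>AN N. z (U (inc i (inc j M))) * pd (U M) h z)"

lemma Phi_sym:
  assumes "smooth h"
  shows "Phi h N i j z = Phi h N j i z"
proof -
  have a: "pd (X j) (pd (X i) h) z = pd (X i) (pd (X j) h) z" using schwarz[OF assms] by simp
  have b: "(\<Sum>K\<in>AN (Suc N). \<Sum>L\<in>AN (Suc N). z (U (inc i K)) * z (U (inc j L)) * pd (U L) (pd (U K) h) z)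
     = (\<Sum>K\<in>AN (Suc N). \<Sum>L\<in>AN (Suc N). z (U (inc j K)) * z (U (inc i L)) * pd (U L) (pd (U K) h) z)"
    by (subst sum.swap) (simp add: schwarz[OF assms] mult_ac)
  have c: "(\<Sum>M\<in>AN N. z (U (inc i (inc j M))) * pd (U M) h z) = (\<Sum>M\<in>AN N. z (U (inc j (inc i M))) * pd (U M) h z)"
    by (simp add: inc_comm)
  show ?thesis unfolding Phi_def a b c by (simp add: add_ac)
qed

lemma Dtot_Phi:
  fixes h :: "('i::finite) dfun"
  assumes h: "difffun h" and N: "ordle N h"
  shows "Dtot i (Dtot j h) z = Phi h N i j z"
proof -
  have sh: "smooth h" using h D_smooth by blast
  have N1: "ordle (Suc N) (Dtot j h)" using ordle_Dtot[OF h N] .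
  have NS: "ordle (Suc N) h" using N ordle_mono by fastforce
  have NX: "ordle (Suc N) (pd (X i) h)" using ordle_pd[OF NS sh] .
  have NU: "ordle (Suc N) (pd (U K) h)" for K using ordle_pd[OF NS sh] .
  let ?A = "AN (Suc N)"
  have "Dtot i (Dtot j h) z = pd (X i) (Dtot j h) z + (\<Sum>K\<in>?A. z (U (inc i K)) * pd (U K) (Dtot j h) z)"
    by (simp add: Dtot_alt[OF N1])
  also have "\<dots> = Dtot j (pd (X i) h) z + (\<Sum>K\<in>?A. z (U (inc i K)) * (Dtot j (pd (U K) h) z + (if 0 < K j then pd (U (dec j K)) h z else 0)))"
    by (simp add: pdX_Dtot[OF h] pdU_Dtot[OF h])
  also have "\<dots> = (pd (X j) (pd (X i) h) z + (\<Sum>L\<in>?A. z (U (inc j L)) * pd (U L) (pd (X i) h) z))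
      + (\<Sum>K\<in>?A. z (U (inc i K)) * ((pd (X j) (pd (U K) h) z + (\<Sum>L\<in>?A. z (U (inc j L)) * pd (U L) (pd (U K) h) z))
           + (if 0 < K j then pd (U (dec j K)) h z else 0)))"
    by (simp add: Dtot_alt[OF NX] Dtot_alt[OF NU])
  also have "\<dots> = (pd (X j) (pd (X i) h) z + (\<Sum>L\<in>?A. z (U (inc j L)) * pd (X i) (pd (U L) h) z))
      + ((\<Sum>K\<in>?A. z (U (inc i K)) * pd (X j) (pd (U K) h) z) + (\<Sum>K\<in>?A. \<Sum>L\<in>?A. z (U (inc i K)) * z (U (inc j L)) * pd (U L) (pd (U K) h) z)
           + (\<Sum>K\<in>?A. if 0 < K j then z (U (inc i K)) * pd (U (dec j K)) h z else 0))"
  proof -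
    have e: "z (U (inc i K)) * ((pd (X j) (pd (U K) h) z + (\<Sum>L\<in>?A. z (U (inc j L)) * pd (U L) (pd (U K) h) z))
           + (if 0 < K j then pd (U (dec j K)) h z else 0))
        = z (U (inc i K)) * pd (X j) (pd (U K) h) z + (\<Sum>L\<in>?A. z (U (inc i K)) * z (U (inc j L)) * pd (U L) (pd (U K) h) z)
          + (if 0 < K j then z (U (inc i K)) * pd (U (dec j K)) h z else 0)" for K
      by (simp add: distrib_left sum_distrib_left mult_ac)
    have f: "(\<Sum>L\<in>?A. z (U (inc j L)) * pd (U L) (pd (X i) h) z) = (\<Sum>L\<in>?A. z (U (inc j L)) * pd (X i) (pd (U L) h) z)"
      using schwarz[OF sh] by metis
    show ?thesis unfolding e f sum.distrib by (simp add: add_ac)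
  qed
  also have "(\<Sum>K\<in>?A. if 0 < K j then z (U (inc i K)) * pd (U (dec j K)) h z else 0)
      = (\<Sum>M\<in>AN N. z (U (inc i (inc j M))) * pd (U M) h z)"
    by (rule shift_sum[OF inc_AN finite_AN]) (use ordleD'[OF N] in simp)
  finally show ?thesis unfolding Phi_def by (simp add: add_ac)
qed

lemma Dtot_comm:
  fixes h :: "('i::finite) dfun"
  assumes h: "difffun h"
  shows "Dtot i (Dtot j h) = Dtot j (Dtot i h)"
proof
  fix z
  obtain N where N: "ordle N h" using D_ordle h by blast
  show "Dtot i (Dtot j h) z = Dtot j (Dtot i h) z"
    using Dtot_Phi[OF h N] Phi_sym[OF D_smooth[OF h]] by metis
qed



lemma dec_comm: "dec i (dec j J) = dec j (dec i J)" unfolding dec_def by (auto simp: fun_eq_iff)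
lemma dec_other: "i \<noteq> j \<Longrightarrow> dec j J i = J i" unfolding dec_def by simp
lemma mlen_dec': "0 < J i \<Longrightarrow> mlen (J::'i::finite \<Rightarrow> nat) = Suc (mlen (dec i J))"
  using mlen_inc[of i "dec i J"] by simp

lemma DJn_char:
  fixes f :: "('i::finite) dfun"
  assumes "difffun f"
  shows "mlen J = k \<Longrightarrow> difffun (DJn k J f) \<and> (\<forall>i. 0 < J i \<longrightarrow> DJn k J f = Dtot i (DJn (k - 1) (dec i J) f))"
proof (induction k arbitrary: J rule: less_induct)
  case (less k)
  show ?case
  proof (cases k)
    case 0
    then have "J = (\<lambda>i. 0)" using less.prems mlen_0_iff by blast
    then show ?thesis using 0 assms by simp
  next
    case (Suc m)
    define i0 where "i0 = (SOME i. 0 < J i)"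
    have "\<exists>i. 0 < J i" using mlen_pos_ex less.prems Suc by blast
    then have i0: "0 < J i0" unfolding i0_def by (rule someI_ex)
    have m0: "mlen (dec i0 J) = m" using mlen_dec'[of J i0, OF i0] less.prems Suc by simp
    have eq: "DJn k J f = Dtot i0 (DJn m (dec i0 J) f)" using Suc by (simp add: i0_def Let_def dec_def)
    have IHm: "difffun (DJn m (dec i0 J) f) \<and> (\<forall>i. 0 < dec i0 J i \<longrightarrow> DJn m (dec i0 J) f = Dtot i (DJn (m - 1) (dec i (dec i0 J)) f))"
      using less.IH[of m "dec i0 J"] m0 Suc by simp
    have "DJn k J f = Dtot i (DJn (k - 1) (dec i J) f)" if i: "0 < J i" for i
    proof (cases "i = i0")
      case True then show ?thesis using eq Suc by simp
    next
      case False
      have di: "0 < dec i0 J i" using i False by (simp add: dec_other)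
      have mpos: "0 < m" using di m0 mlen_dec'[of "dec i0 J" i, OF di] by simp
      have md: "mlen (dec i J) = m" using mlen_dec'[of J i, OF i] less.prems Suc by simp
      have i0' : "0 < dec i J i0" using i0 False by (simp add: dec_other)
      have IHi: "difffun (DJn m (dec i J) f) \<and> (\<forall>i'. 0 < dec i J i' \<longrightarrow> DJn m (dec i J) f = Dtot i' (DJn (m - 1) (dec i' (dec i J)) f))"
        using less.IH[of m "dec i J"] md Suc by simp
      have mm: "mlen (dec i (dec i0 J)) = m - 1" using mlen_dec'[of "dec i0 J" i, OF di] m0 by simp
      have dd: "difffun (DJn (m - 1) (dec i (dec i0 J)) f)"
        using less.IH[of "m - 1" "dec i (dec i0 J)"] mm Suc by simp
      have "DJn k J f = Dtot i0 (Dtot i (DJn (m - 1) (dec i (dec i0 J)) f))" using eq IHm di by simp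
      also have "\<dots> = Dtot i (Dtot i0 (DJn (m - 1) (dec i (dec i0 J)) f))" using Dtot_comm[OF dd] by simp
      also have "\<dots> = Dtot i (DJn m (dec i J) f)" using IHi i0' by (simp add: dec_comm)
      finally show ?thesis using Suc by simp
    qed
    moreover have "difffun (DJn k J f)" using eq IHm by auto
    ultimately show ?thesis by blast
  qed
qed

lemma D_DJ[intro]: fixes f :: "('i::finite) dfun" shows "difffun f \<Longrightarrow> difffun (DJ J f)"
  unfolding DJ_def using DJn_char by blast

lemma DJ_zero_idx[simp]: "DJ (\<lambda>i. 0) f = f" unfolding DJ_def by (simp add: mlen_def)

lemma DJ_inc:
  fixes f :: "('i::finite) dfun"
  assumes "difffun f"
  shows "DJ (inc i J) f = Dtot i (DJ J f)"
proof -
  have "difffun (DJn (mlen (inc i J)) (inc i J) f) \<and> (\<forall>i'. 0 < inc i J i' \<longrightarrow> DJn (mlen (inc i J)) (inc i J) f = Dtot i' (DJn (mlen (inc i J) - 1) (dec i' (inc i J)) f))"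
    by (rule DJn_char[OF assms]) simp
  note this[THEN conjunct2, rule_format, OF inc_pos[of i J]]
  then have "DJn (mlen (inc i J)) (inc i J) f = Dtot i (DJn (mlen (inc i J) - 1) (dec i (inc i J)) f)" .
  then show ?thesis unfolding DJ_def by (simp add: mlen_inc)
qed

lemma idx_induct:
  fixes P :: "('i::finite \<Rightarrow> nat) \<Rightarrow> bool"
  assumes "P (\<lambda>i. 0)" "\<And>J i. P J \<Longrightarrow> P (inc i J)"
  shows "P J"
proof (induction "mlen J" arbitrary: J)
  case 0
  then have "J = (\<lambda>i. 0)" using mlen_0_iff by metis
  then show ?case using assms(1) by simp
next
  case (Suc k)
  obtain i where i: "0 < J i" using mlen_pos_ex Suc.hyps(2)[symmetric] by blast
  have "Suc k = Suc (mlen (dec i J))" using Suc.hyps(2) mlen_dec'[of J i, OF i] by simp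
  then have "P (dec i J)" using Suc.hyps(1) by simp
  then have "P (inc i (dec i J))" by (rule assms(2))
  then show ?case using inc_dec[of J i, OF i] by simp
qed

lemma DJ_Dtot:
  fixes f :: "('i::finite) dfun"
  assumes "difffun f"
  shows "DJ J (Dtot i f) = Dtot i (DJ J f)"
proof (induction J rule: idx_induct)
  case 1 then show ?case by simp
next
  case (2 J i')
  have "DJ (inc i' J) (Dtot i f) = Dtot i' (Dtot i (DJ J f))" using DJ_inc[OF D_Dtot[OF assms], of i' J i] 2 by simp
  also have "\<dots> = Dtot i (Dtot i' (DJ J f))" by (rule Dtot_comm[OF D_DJ[OF assms]])
  finally show ?case using DJ_inc[OF assms] by simp
qed

lemma DJ_inc': "difffun f \<Longrightarrow> DJ (inc i J) (f::('i::finite) dfun) = DJ J (Dtot i f)"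
  by (simp add: DJ_inc DJ_Dtot)

lemma DJ_zero[simp]: "DJ (J::'i::finite \<Rightarrow> nat) (\<lambda>z. 0) = (\<lambda>z. 0)"
  by (induction J rule: idx_induct) (simp_all add: DJ_inc)

lemma DJ_add:
  fixes f g :: "('i::finite) dfun"
  assumes "difffun f" "difffun g"
  shows "DJ J (\<lambda>z. f z + g z) = (\<lambda>z. DJ J f z + DJ J g z)"
proof (induction J rule: idx_induct)
  case (2 J i)
  have "DJ (inc i J) (\<lambda>z. f z + g z) = Dtot i (\<lambda>z. DJ J f z + DJ J g z)"
    using DJ_inc[OF D_add[OF assms]] 2 by simp
  also have "\<dots> = (\<lambda>z. Dtot i (DJ J f) z + Dtot i (DJ J g) z)" using assms by (intro Dtot_add D_DJ)
  finally show ?case using assms by (simp add: DJ_inc)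
qed simp

lemma DJ_cmult:
  fixes f :: "('i::finite) dfun"
  assumes "difffun f"
  shows "DJ J (\<lambda>z. k * f z) = (\<lambda>z. k * DJ J f z)"
proof (induction J rule: idx_induct)
  case (2 J i)
  have "DJ (inc i J) (\<lambda>z. k * f z) = Dtot i (\<lambda>z. k * DJ J f z)"
    using DJ_inc[OF D_cmult[OF assms]] 2 by simp
  also have "\<dots> = (\<lambda>z. k * Dtot i (DJ J f) z)" using assms by (intro Dtot_cmult D_DJ)
  finally show ?case using assms by (simp add: DJ_inc)
qed simp

lemma DJ_uminus:
  fixes f :: "('i::finite) dfun"
  assumes "difffun f"
  shows "DJ J (\<lambda>z. - f z) = (\<lambda>z. - DJ J f z)"
  using DJ_cmult[OF assms, of J "-1"] by simp

lemma DJ_diff: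
  fixes f g :: "('i::finite) dfun"
  assumes "difffun f" "difffun g"
  shows "DJ J (\<lambda>z. f z - g z) = (\<lambda>z. DJ J f z - DJ J g z)"
  using DJ_add[OF assms(1) D_uminus[OF assms(2)], of J] DJ_uminus[OF assms(2), of J] by simp

lemma DJ_sum:
  fixes F :: "'a \<Rightarrow> ('i::finite) dfun"
  assumes "\<And>a. a \<in> A \<Longrightarrow> difffun (F a)"
  shows "DJ J (\<lambda>z. \<Sum>a\<in>A. F a z) = (\<lambda>z. \<Sum>a\<in>A. DJ J (F a) z)"
  using assms
proof (induction A rule: infinite_finite_induct)
  case (insert x A)
  then show ?case by (simp add: DJ_add D_sum)
qed auto



lemma dsupp_frechet_op: "dsupp (frechet_op f) = Jset f"
  unfolding dsupp_def frechet_op_def Jset_def by simp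

lemma applyop_alt:
  fixes A :: "('i::finite) dop"
  assumes "finite B" "dsupp A \<subseteq> B"
  shows "applyop A F = (\<lambda>z. \<Sum>J\<in>B. A J z * DJ J F z)"
proof
  fix z show "applyop A F z = (\<Sum>J\<in>B. A J z * DJ J F z)"
    unfolding applyop_def by (rule sum_ext_zero) (use assms in \<open>auto simp: dsupp_def\<close>)
qed

lemma adjapply_alt:
  fixes A :: "('i::finite) dop"
  assumes "finite B" "dsupp A \<subseteq> B"
  shows "adjapply A C = (\<lambda>z. \<Sum>J\<in>B. (-1::real) ^ mlen J * DJ J (\<lambda>w. A J w * C w) z)"
proof
  fix z show "adjapply A C z = (\<Sum>J\<in>B. (-1::real) ^ mlen J * DJ J (\<lambda>w. A J w * C w) z)"
    unfolding adjapply_def by (rule sum_ext_zero) (use assms in \<open>auto simp: dsupp_def\<close>)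
qed

lemma frechet_alt:
  fixes f :: "('i::finite) dfun"
  assumes "ordle N f"
  shows "frechet f P = (\<lambda>z. \<Sum>J\<in>AN N. pd (U J) f z * DJ J P z)"
  unfolding frechet_def frechet_op_def
  by (rule applyop_alt) (use Jset_AN[OF assms] in \<open>auto simp: dsupp_def Jset_def\<close>)

lemma euler_alt:
  fixes f :: "('i::finite) dfun"
  assumes "ordle N f"
  shows "euler f = (\<lambda>z. \<Sum>J\<in>AN N. (-1::real) ^ mlen J * DJ J (pd (U J) f) z)"
proof -
  have "dsupp (frechet_op f) \<subseteq> AN N" using Jset_AN[OF assms] by (simp add: dsupp_frechet_op)
  from adjapply_alt[OF finite_AN this, of "\<lambda>z. 1"] show ?thesis
    unfolding euler_def by (simp add: frechet_op_def)
qed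

lemma D_applyop[intro]:
  fixes A :: "('i::finite) dop"
  assumes "is_dop A" "difffun F"
  shows "difffun (applyop A F)"
proof -
  have "difffun (A J)" for J using assms unfolding is_dop_def by blast
  then show ?thesis unfolding applyop_def using assms(2) by (intro D_sum D_mult D_DJ)
qed

lemma D_adjapply[intro]:
  fixes A :: "('i::finite) dop"
  assumes "is_dop A" "difffun C"
  shows "difffun (adjapply A C)"
proof -
  have "difffun (A J)" for J using assms unfolding is_dop_def by blast
  then show ?thesis unfolding adjapply_def using assms(2) by (intro D_sum D_mult D_DJ D_const)
qed

lemma is_dop_frechet_op[intro]: "difffun (f::('i::finite) dfun) \<Longrightarrow> is_dop (frechet_op f)"
proof -
  assume f: "difffun f"
  obtain N where N: "ordle N f" using D_ordle f by blast
  have "finite (Jset f)" using Jset_AN[OF N] finite_subset by blast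
  then show ?thesis unfolding is_dop_def dsupp_frechet_op using f by (simp add: frechet_op_def D_pd)
qed

lemma D_frechet[intro]: "difffun (f::('i::finite) dfun) \<Longrightarrow> difffun P \<Longrightarrow> difffun (frechet f P)"
  unfolding frechet_def by (intro D_applyop is_dop_frechet_op)

lemma D_euler[intro]: "difffun (f::('i::finite) dfun) \<Longrightarrow> difffun (euler f)"
  unfolding euler_def by (intro D_adjapply is_dop_frechet_op D_const)

section \<open>Euler operator: linearity and divergences\<close>

lemma euler_add:
  fixes f g :: "('i::finite) dfun"
  assumes "difffun f" "difffun g"
  shows "euler (\<lambda>z. f z + g z) = (\<lambda>z. euler f z + euler g z)"
proof -
  obtain N where N: "ordle N f" "ordle N g" using D_ordle2 assms by blast
  have l: "ldiff f" "ldiff g" using assms D_ldiff by auto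
  have N': "ordle N (\<lambda>z. f z + g z)" using N l by (rule ordle_add)
  show ?thesis
  proof
    fix z
    have "euler (\<lambda>z. f z + g z) z = (\<Sum>J\<in>AN N. (-1::real) ^ mlen J * DJ J (\<lambda>z. pd (U J) f z + pd (U J) g z) z)"
      by (simp add: euler_alt[OF N'] pd_add[OF l])
    also have "\<dots> = (\<Sum>J\<in>AN N. (-1::real) ^ mlen J * DJ J (pd (U J) f) z + (-1::real) ^ mlen J * DJ J (pd (U J) g) z)"
      using assms by (simp add: DJ_add D_pd distrib_left)
    finally show "euler (\<lambda>z. f z + g z) z = euler f z + euler g z"
      by (simp add: euler_alt[OF N(1)] euler_alt[OF N(2)] sum.distrib)
  qed
qed

lemma euler_cmult:
  fixes f :: "('i::finite) dfun"
  assumes "difffun f"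
  shows "euler (\<lambda>z. k * f z) = (\<lambda>z. k * euler f z)"
proof -
  obtain N where N: "ordle N f" using D_ordle assms by blast
  have l: "ldiff f" using assms D_ldiff by auto
  have N': "ordle N (\<lambda>z. k * f z)" using ordle_mult[OF ordle_const N ldiff_const l] .
  show ?thesis
  proof
    fix z
    have "euler (\<lambda>z. k * f z) z = (\<Sum>J\<in>AN N. (-1::real) ^ mlen J * DJ J (\<lambda>z. k * pd (U J) f z) z)"
      by (simp add: euler_alt[OF N'] pd_cmult[OF l])
    also have "\<dots> = (\<Sum>J\<in>AN N. k * ((-1::real) ^ mlen J * DJ J (pd (U J) f) z))"
      using assms by (simp add: DJ_cmult D_pd mult_ac)
    finally show "euler (\<lambda>z. k * f z) z = k * euler f z"
      by (simp add: euler_alt[OF N] sum_distrib_left)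
  qed
qed

lemma euler_uminus:
  fixes f :: "('i::finite) dfun"
  assumes "difffun f"
  shows "euler (\<lambda>z. - f z) = (\<lambda>z. - euler f z)"
  using euler_cmult[OF assms, of "-1"] by simp

lemma euler_diff:
  fixes f g :: "('i::finite) dfun"
  assumes "difffun f" "difffun g"
  shows "euler (\<lambda>z. f z - g z) = (\<lambda>z. euler f z - euler g z)"
  using euler_add[OF assms(1) D_uminus[OF assms(2)]] euler_uminus[OF assms(2)] by simp

lemma euler_zero[simp]: "euler (\<lambda>z. 0::real) = (\<lambda>z. 0 :: real)"
  unfolding euler_def adjapply_def dsupp_def frechet_op_def by (simp add: pd_const)

lemma euler_sum:
  fixes F :: "'a \<Rightarrow> ('i::finite) dfun"
  assumes "\<And>a. a \<in> A \<Longrightarrow> difffun (F a)"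
  shows "euler (\<lambda>z. \<Sum>a\<in>A. F a z) = (\<lambda>z. \<Sum>a\<in>A. euler (F a) z)"
  using assms
proof (induction A rule: infinite_finite_induct)
  case (insert x A)
  then show ?case by (simp add: euler_add D_sum)
qed auto



lemma pdU_Dtot':
  fixes h :: "('i::finite) dfun"
  assumes h: "difffun h"
  shows "pd (U K) (Dtot i h) = (\<lambda>z. Dtot i (pd (U K) h) z + (if 0 < K i then pd (U (dec i K)) h else (\<lambda>z. 0)) z)"
  using pdU_Dtot[OF h] by (simp add: if_distrib)

lemma euler_Dtot:
  fixes h :: "('i::finite) dfun"
  assumes h: "difffun h"
  shows "euler (Dtot i h) = (\<lambda>z. 0)"
proof
  fix z
  obtain N where N: "ordle N h" using D_ordle h by blast
  have N1: "ordle (Suc N) (Dtot i h)" using ordle_Dtot[OF h N] .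
  let ?A = "AN (Suc N)"
  have dd: "difffun (if 0 < K i then pd (U (dec i K)) h else (\<lambda>z. 0))" for K using h by auto
  have "euler (Dtot i h) z = (\<Sum>K\<in>?A. (-1::real) ^ mlen K * DJ K (pd (U K) (Dtot i h)) z)"
    by (simp add: euler_alt[OF N1])
  also have "\<dots> = (\<Sum>K\<in>?A. (-1::real) ^ mlen K * DJ K (Dtot i (pd (U K) h)) z
       + (if 0 < K i then (-1::real) ^ mlen K * DJ K (pd (U (dec i K)) h) z else 0))"
  proof (intro sum.cong refl)
    fix K
    have "DJ K (pd (U K) (Dtot i h)) z = DJ K (Dtot i (pd (U K) h)) z + DJ K (if 0 < K i then pd (U (dec i K)) h else (\<lambda>z. 0)) z"
      unfolding pdU_Dtot'[OF h] using h dd by (simp add: DJ_add D_Dtot D_pd)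
    then show "(-1::real) ^ mlen K * DJ K (pd (U K) (Dtot i h)) z = (-1::real) ^ mlen K * DJ K (Dtot i (pd (U K) h)) z
       + (if 0 < K i then (-1::real) ^ mlen K * DJ K (pd (U (dec i K)) h) z else 0)"
      by (cases "0 < K i") (simp_all add: distrib_left)
  qed
  also have "\<dots> = (\<Sum>K\<in>?A. (-1::real) ^ mlen K * DJ (inc i K) (pd (U K) h) z)
       + (\<Sum>K\<in>?A. if 0 < K i then (-1::real) ^ mlen K * DJ K (pd (U (dec i K)) h) z else 0)"
    using h by (simp add: sum.distrib DJ_inc' D_pd)
  also have "(\<Sum>K\<in>?A. if 0 < K i then (-1::real) ^ mlen K * DJ K (pd (U (dec i K)) h) z else 0)
      = (\<Sum>M\<in>AN N. (-1::real) ^ mlen (inc i M) * DJ (inc i M) (pd (U M) h) z)"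
    by (rule shift_sum[OF inc_AN finite_AN, where F="\<lambda>K M. (-1::real) ^ mlen K * DJ K (pd (U M) h) z"])
       (use ordleD[OF N] in \<open>auto simp: AN_def\<close>)
  also have "(\<Sum>K\<in>?A. (-1::real) ^ mlen K * DJ (inc i K) (pd (U K) h) z) = (\<Sum>K\<in>AN N. (-1::real) ^ mlen K * DJ (inc i K) (pd (U K) h) z)"
    by (rule sum_ext_zero[symmetric, OF finite_AN AN_mono]) (use ordleD[OF N] in \<open>auto simp: AN_def\<close>)
  finally show "euler (Dtot i h) z = 0" by (simp add: mlen_inc sum_negf)
qed

section \<open>Divergences\<close>

definition Div :: "('i::finite) dfun \<Rightarrow> bool" where
  "Div h \<longleftrightarrow> (\<exists>F. (\<forall>i. difffun (F i)) \<and> h = (\<lambda>z. \<Sum>i\<in>UNIV. Dtot i (F i) z))"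

lemma Div_cong: "Div h \<Longrightarrow> (\<And>z. h z = g z) \<Longrightarrow> Div g"
proof -
  assume "Div h" "\<And>z. h z = g z"
  then have "h = g" by auto
  with \<open>Div h\<close> show ?thesis by simp
qed

lemma Div_zero: "Div (\<lambda>z. 0::real)"
  unfolding Div_def by (rule exI[of _ "\<lambda>i z. 0"]) simp

lemma Div_Dtot: "difffun g \<Longrightarrow> Div (Dtot i g)"
  unfolding Div_def
proof (rule exI[of _ "\<lambda>j. if j = i then g else (\<lambda>z. 0)"], intro conjI allI ext)
  fix z assume "difffun g"
  show "Dtot i g z = (\<Sum>j\<in>UNIV. Dtot j (if j = i then g else (\<lambda>z. 0)) z)"
    by (simp add: if_distrib[of "\<lambda>f. Dtot _ f _"] cong: if_cong)
qed (auto)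

lemma Div_add: "Div f \<Longrightarrow> Div g \<Longrightarrow> Div (\<lambda>z. f z + g z)"
proof -
  assume "Div f" "Div g"
  then obtain F G where F: "\<forall>i. difffun (F i)" "f = (\<lambda>z. \<Sum>i\<in>UNIV. Dtot i (F i) z)"
    and G: "\<forall>i. difffun (G i)" "g = (\<lambda>z. \<Sum>i\<in>UNIV. Dtot i (G i) z)" unfolding Div_def by blast
  show ?thesis unfolding Div_def
    by (rule exI[of _ "\<lambda>i z. F i z + G i z"]) (use F G in \<open>auto simp: Dtot_add sum.distrib\<close>)
qed

lemma Div_cmult: "Div f \<Longrightarrow> Div (\<lambda>z. k * f z)"
proof -
  assume "Div f"
  then obtain F where F: "\<forall>i. difffun (F i)" "f = (\<lambda>z. \<Sum>i\<in>UNIV. Dtot i (F i) z)" unfolding Div_def by blast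
  show ?thesis unfolding Div_def
    by (rule exI[of _ "\<lambda>i z. k * F i z"]) (use F in \<open>auto simp: Dtot_cmult sum_distrib_left\<close>)
qed

lemma Div_uminus: "Div f \<Longrightarrow> Div (\<lambda>z. - f z)" using Div_cmult[of f "-1"] by simp
lemma Div_diff: "Div f \<Longrightarrow> Div g \<Longrightarrow> Div (\<lambda>z. f z - g z)"
  using Div_add[OF _ Div_uminus] by simp

lemma Div_sum: "(\<And>a. a \<in> A \<Longrightarrow> Div (F a)) \<Longrightarrow> Div (\<lambda>z. \<Sum>a\<in>A. F a z)"
proof (induction A rule: infinite_finite_induct)
  case (insert x A) then show ?case by (simp add: Div_add)
qed (auto simp: Div_zero)

lemma Div_D: "Div h \<Longrightarrow> difffun h"
  unfolding Div_def by (auto intro!: D_sum D_Dtot)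

lemma euler_Div: "Div h \<Longrightarrow> euler h = (\<lambda>z. 0)"
proof -
  assume "Div h"
  then obtain F where F: "\<forall>i. difffun (F i)" "h = (\<lambda>z. \<Sum>i\<in>UNIV. Dtot i (F i) z)" unfolding Div_def by blast
  then show ?thesis by (simp add: euler_sum D_Dtot euler_Dtot)
qed



section \<open>Integration by parts\<close>

lemma ibp_all:
  fixes J :: "'i::finite \<Rightarrow> nat"
  shows "\<forall>a b::'i dfun. difffun a \<longrightarrow> difffun b \<longrightarrow>
      Div (\<lambda>z. a z * DJ J b z - (-1::real) ^ mlen J * DJ J a z * b z)"
proof (induction J rule: idx_induct)
  case 1
  show ?case by (auto simp: mlen_def intro: Div_cong[OF Div_zero])
next
  case (2 J i)
  show ?case
  proof (intro allI impI)
    fix a b :: "'i dfun" assume a: "difffun a" and b: "difffun b"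
    have T1: "Div (\<lambda>z. a z * DJ J (Dtot i b) z - (-1::real) ^ mlen J * DJ J a z * Dtot i b z)"
      using 2 a b by (simp add: D_Dtot)
    have T2: "Div (\<lambda>z. (-1::real) ^ mlen J * Dtot i (\<lambda>z. DJ J a z * b z) z)"
      using a b by (intro Div_cmult Div_Dtot D_mult D_DJ)
    have e: "Dtot i (\<lambda>z. DJ J a z * b z) = (\<lambda>z. Dtot i (DJ J a) z * b z + DJ J a z * Dtot i b z)"
      using a b by (intro Dtot_mult D_DJ)
    show "Div (\<lambda>z. a z * DJ (inc i J) b z - (-1::real) ^ mlen (inc i J) * DJ (inc i J) a z * b z)"
      using Div_add[OF T1 T2]
      by (rule Div_cong) (unfold e DJ_inc'[OF b] DJ_inc[OF a] mlen_inc, simp add: algebra_simps)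
  qed
qed

lemma ibp:
  fixes a b :: "('i::finite) dfun"
  assumes "difffun a" "difffun b"
  shows "Div (\<lambda>z. a z * DJ J b z - (-1::real) ^ mlen J * DJ J a z * b z)"
  using ibp_all assms by blast

lemma op_ibp:
  fixes R :: "('i::finite) dop"
  assumes R: "is_dop R" and C: "difffun C" and B: "difffun B"
  shows "Div (\<lambda>z. C z * applyop R B z - adjapply R C z * B z)"
proof -
  have RJ: "difffun (R J)" for J using R unfolding is_dop_def by blast
  have "Div (\<lambda>z. \<Sum>J\<in>dsupp R. (R J z * C z) * DJ J B z - (-1::real) ^ mlen J * DJ J (\<lambda>w. R J w * C w) z * B z)"
    by (intro Div_sum ibp[where a="\<lambda>w. R J w * C w" for J, simplified] D_mult RJ C B)
  then show ?thesis
    by (rule Div_cong) (simp add: applyop_def adjapply_def sum_distrib_left sum_distrib_right sum_subtractf mult_ac)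
qed

lemma euler_op_ibp:
  fixes R :: "('i::finite) dop"
  assumes R: "is_dop R" and C: "difffun C" and B: "difffun B"
  shows "euler (\<lambda>z. C z * applyop R B z) = euler (\<lambda>z. adjapply R C z * B z)"
proof -
  have "euler (\<lambda>z. C z * applyop R B z - adjapply R C z * B z) = (\<lambda>z. 0)"
    by (rule euler_Div[OF op_ibp[OF assms]])
  then have "(\<lambda>z. euler (\<lambda>z. C z * applyop R B z) z - euler (\<lambda>z. adjapply R C z * B z) z) = (\<lambda>z. 0)"
    using assms by (subst euler_diff[symmetric]) (auto intro!: D_mult D_applyop D_adjapply)
  then show ?thesis by (auto simp: fun_eq_iff)
qed

section \<open>Product rules\<close>

lemma euler_mult:
  fixes f g :: "('i::finite) dfun"
  assumes f: "difffun f" and g: "difffun g"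
  shows "euler (\<lambda>z. f z * g z) = (\<lambda>z. adjapply (frechet_op f) g z + adjapply (frechet_op g) f z)"
proof
  fix z
  obtain N where N: "ordle N f" "ordle N g" using D_ordle2 assms by blast
  have l: "ldiff f" "ldiff g" using assms D_ldiff by auto
  have N': "ordle N (\<lambda>z. f z * g z)" using N l by (rule ordle_mult)
  have sf: "dsupp (frechet_op f) \<subseteq> AN N" "dsupp (frechet_op g) \<subseteq> AN N"
    using Jset_AN N by (auto simp: dsupp_frechet_op)
  have "euler (\<lambda>z. f z * g z) z = (\<Sum>J\<in>AN N. (-1::real) ^ mlen J * DJ J (\<lambda>z. pd (U J) f z * g z + f z * pd (U J) g z) z)"
    by (simp add: euler_alt[OF N'] pd_mult[OF l])
  also have "\<dots> = (\<Sum>J\<in>AN N. (-1::real) ^ mlen J * DJ J (\<lambda>w. frechet_op f J w * g w) z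
       + (-1::real) ^ mlen J * DJ J (\<lambda>w. frechet_op g J w * f w) z)"
    using f g by (simp add: DJ_add D_pd D_mult distrib_left frechet_op_def mult_ac)
  finally show "euler (\<lambda>z. f z * g z) z = adjapply (frechet_op f) g z + adjapply (frechet_op g) f z"
    by (simp add: adjapply_alt[OF finite_AN sf(1)] adjapply_alt[OF finite_AN sf(2)] sum.distrib)
qed

lemma frechet_mult:
  fixes f g :: "('i::finite) dfun"
  assumes f: "difffun f" and g: "difffun g"
  shows "frechet (\<lambda>z. f z * g z) P = (\<lambda>z. frechet f P z * g z + f z * frechet g P z)"
proof -
  obtain N where N: "ordle N f" "ordle N g" using D_ordle2 assms by blast
  have l: "ldiff f" "ldiff g" using assms D_ldiff by auto
  have N': "ordle N (\<lambda>z. f z * g z)" using N l by (rule ordle_mult)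
  show ?thesis
    by (simp add: frechet_alt[OF N'] frechet_alt[OF N(1)] frechet_alt[OF N(2)] pd_mult[OF l]
        algebra_simps sum.distrib sum_distrib_left sum_distrib_right)
qed

lemma frechet_add:
  fixes f g :: "('i::finite) dfun"
  assumes f: "difffun f" and g: "difffun g"
  shows "frechet (\<lambda>z. f z + g z) P = (\<lambda>z. frechet f P z + frechet g P z)"
proof -
  obtain N where N: "ordle N f" "ordle N g" using D_ordle2 assms by blast
  have l: "ldiff f" "ldiff g" using assms D_ldiff by auto
  have N': "ordle N (\<lambda>z. f z + g z)" using N l by (rule ordle_add)
  show ?thesis
    by (simp add: frechet_alt[OF N'] frechet_alt[OF N(1)] frechet_alt[OF N(2)] pd_add[OF l]
        algebra_simps sum.distrib)
qed

lemma frechet_cmult: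
  fixes f :: "('i::finite) dfun"
  assumes f: "difffun f"
  shows "frechet (\<lambda>z. k * f z) P = (\<lambda>z. k * frechet f P z)"
  using frechet_mult[OF D_const f, of k P] by (simp add: frechet_def frechet_op_def pd_const applyop_def dsupp_def)

lemma frechet_zero[simp]: "frechet (\<lambda>z. 0) P = (\<lambda>z. 0)"
  by (simp add: frechet_def frechet_op_def pd_const applyop_def dsupp_def)

lemma frechet_uminus:
  fixes f :: "('i::finite) dfun"
  assumes f: "difffun f"
  shows "frechet (\<lambda>z. - f z) P = (\<lambda>z. - frechet f P z)"
  using frechet_cmult[OF f, of "-1" P] by simp

lemma frechet_diff:
  fixes f g :: "('i::finite) dfun"
  assumes f: "difffun f" and g: "difffun g"
  shows "frechet (\<lambda>z. f z - g z) P = (\<lambda>z. frechet f P z - frechet g P z)"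
  using frechet_add[OF f D_uminus[OF g], of P] frechet_uminus[OF g, of P] by simp

lemma frechet_sum:
  fixes F :: "'a \<Rightarrow> ('i::finite) dfun"
  assumes "\<And>a. a \<in> A \<Longrightarrow> difffun (F a)"
  shows "frechet (\<lambda>z. \<Sum>a\<in>A. F a z) P = (\<lambda>z. \<Sum>a\<in>A. frechet (F a) P z)"
  using assms
proof (induction A rule: infinite_finite_induct)
  case (insert x A)
  then show ?case by (simp add: frechet_add D_sum)
qed auto

lemma applyop_diff:
  fixes A :: "('i::finite) dop"
  assumes "difffun P" "difffun Q"
  shows "applyop A (\<lambda>z. P z - Q z) = (\<lambda>z. applyop A P z - applyop A Q z)"
  using assms by (simp add: applyop_def DJ_diff algebra_simps sum_subtractf)

lemma frechet_Pdiff: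
  fixes f :: "('i::finite) dfun"
  assumes "difffun P" "difffun Q"
  shows "frechet f (\<lambda>z. P z - Q z) = (\<lambda>z. frechet f P z - frechet f Q z)"
  unfolding frechet_def using applyop_diff[OF assms] .



lemma frechet_Dtot:
  fixes h :: "('i::finite) dfun"
  assumes h: "difffun h" and P: "difffun P"
  shows "frechet (Dtot i h) P = Dtot i (frechet h P)"
proof
  fix z
  obtain N where N: "ordle N h" using D_ordle h by blast
  have N1: "ordle (Suc N) (Dtot i h)" using ordle_Dtot[OF h N] .
  let ?A = "AN (Suc N)"
  have "frechet (Dtot i h) P z = (\<Sum>K\<in>?A. pd (U K) (Dtot i h) z * DJ K P z)" by (simp add: frechet_alt[OF N1])
  also have "\<dots> = (\<Sum>K\<in>?A. Dtot i (pd (U K) h) z * DJ K P z + (if 0 < K i then pd (U (dec i K)) h z * DJ K P z else 0))"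
    by (intro sum.cong refl) (simp add: pdU_Dtot[OF h] distrib_right)
  also have "\<dots> = (\<Sum>K\<in>?A. Dtot i (pd (U K) h) z * DJ K P z) + (\<Sum>K\<in>?A. if 0 < K i then pd (U (dec i K)) h z * DJ K P z else 0)"
    by (simp add: sum.distrib)
  also have "(\<Sum>K\<in>?A. if 0 < K i then pd (U (dec i K)) h z * DJ K P z else 0) = (\<Sum>M\<in>AN N. pd (U M) h z * DJ (inc i M) P z)"
    by (rule shift_sum[OF inc_AN finite_AN, where F="\<lambda>K M. pd (U M) h z * DJ K P z"])
       (use ordleD[OF N] in \<open>auto simp: AN_def\<close>)
  also have "(\<Sum>K\<in>?A. Dtot i (pd (U K) h) z * DJ K P z) = (\<Sum>K\<in>AN N. Dtot i (pd (U K) h) z * DJ K P z)"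
    by (rule sum_ext_zero[symmetric, OF finite_AN AN_mono]) (use ordleD[OF N] in \<open>auto simp: AN_def\<close>)
  also have "(\<Sum>K\<in>AN N. Dtot i (pd (U K) h) z * DJ K P z) + (\<Sum>M\<in>AN N. pd (U M) h z * DJ (inc i M) P z)
      = Dtot i (\<lambda>z. \<Sum>K\<in>AN N. pd (U K) h z * DJ K P z) z"
    using h P by (simp add: Dtot_sum Dtot_mult D_pd D_DJ D_mult DJ_inc sum.distrib)
  finally show "frechet (Dtot i h) P z = Dtot i (frechet h P) z" by (simp add: frechet_alt[OF N])
qed

lemma frechet_DJ:
  fixes h :: "('i::finite) dfun"
  assumes h: "difffun h" and P: "difffun P"
  shows "frechet (DJ J h) P = DJ J (frechet h P)"
proof (induction J rule: idx_induct)
  case (2 J i)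
  have "frechet (DJ (inc i J) h) P = Dtot i (frechet (DJ J h) P)"
    using h P by (simp add: DJ_inc frechet_Dtot D_DJ)
  then show ?case using 2 h P by (simp add: DJ_inc D_frechet)
qed simp

lemma Div_frechet:
  fixes h :: "('i::finite) dfun"
  assumes "Div h" and B: "difffun B"
  shows "Div (frechet h B)"
proof -
  obtain F where F: "\<forall>i. difffun (F i)" "h = (\<lambda>z. \<Sum>i\<in>UNIV. Dtot i (F i) z)" using assms(1) unfolding Div_def by blast
  have "frechet h B = (\<lambda>z. \<Sum>i\<in>UNIV. Dtot i (frechet (F i) B) z)"
    using F B by (simp add: frechet_sum D_Dtot frechet_Dtot)
  then show ?thesis unfolding Div_def using F B by (intro exI[of _ "\<lambda>i. frechet (F i) B"]) (auto intro!: D_frechet)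
qed

lemma second_variation:
  fixes L :: "('i::finite) dfun"
  assumes L: "difffun L" and P: "difffun P" and B: "difffun B"
  shows "(\<lambda>z. frechet (frechet L P) B z - frechet (frechet L B) P z) = frechet L (\<lambda>z. frechet P B z - frechet B P z)"
proof -
  obtain N where N: "ordle N L" using D_ordle L by blast
  have sL: "smooth L" using L D_smooth by blast
  have NK: "ordle N (pd (U K) L)" for K using ordle_pd[OF N sL] .
  have expand: "frechet (frechet L Q) R = (\<lambda>z. (\<Sum>K\<in>AN N. \<Sum>J\<in>AN N. pd (U J) (pd (U K) L) z * DJ J R z * DJ K Q z)
        + (\<Sum>K\<in>AN N. pd (U K) L z * DJ K (frechet Q R) z))"
    if Q: "difffun Q" and R: "difffun R" for Q R
  proof -
    have "frechet (frechet L Q) R = frechet (\<lambda>z. \<Sum>K\<in>AN N. pd (U K) L z * DJ K Q z) R"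
      by (simp add: frechet_alt[OF N])
    also have "\<dots> = (\<lambda>z. \<Sum>K\<in>AN N. frechet (\<lambda>z. pd (U K) L z * DJ K Q z) R z)"
      using L Q by (intro frechet_sum D_mult D_pd D_DJ)
    also have "\<dots> = (\<lambda>z. \<Sum>K\<in>AN N. frechet (pd (U K) L) R z * DJ K Q z + pd (U K) L z * DJ K (frechet Q R) z)"
      using L Q R by (simp add: frechet_mult D_pd D_DJ frechet_DJ)
    also have "\<dots> = (\<lambda>z. (\<Sum>K\<in>AN N. \<Sum>J\<in>AN N. pd (U J) (pd (U K) L) z * DJ J R z * DJ K Q z)
        + (\<Sum>K\<in>AN N. pd (U K) L z * DJ K (frechet Q R) z))"
      by (simp add: frechet_alt[OF NK] sum.distrib sum_distrib_right)
    finally show ?thesis .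
  qed
  have sym: "(\<Sum>K\<in>AN N. \<Sum>J\<in>AN N. pd (U J) (pd (U K) L) z * DJ J B z * DJ K P z)
      = (\<Sum>K\<in>AN N. \<Sum>J\<in>AN N. pd (U J) (pd (U K) L) z * DJ J P z * DJ K B z)" for z
    by (subst sum.swap) (simp add: schwarz[OF sL] mult_ac)
  have e3: "frechet L (\<lambda>z. frechet P B z - frechet B P z) = (\<lambda>z. (\<Sum>K\<in>AN N. pd (U K) L z * DJ K (frechet P B) z)
      - (\<Sum>K\<in>AN N. pd (U K) L z * DJ K (frechet B P) z))"
    unfolding frechet_Pdiff[OF D_frechet[OF P B] D_frechet[OF B P]] frechet_alt[OF N] ..
  show ?thesis
  proof
    fix z
    show "frechet (frechet L P) B z - frechet (frechet L B) P z = frechet L (\<lambda>z. frechet P B z - frechet B P z) z"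
      unfolding e3 expand[OF P B] expand[OF B P] using sym[of z] by simp
  qed
qed



section \<open>Vanishing to order m at a point\<close>

primrec van :: "('i::finite) jet \<Rightarrow> nat \<Rightarrow> 'i dfun \<Rightarrow> bool" where
  "van z0 0 h \<longleftrightarrow> h z0 = 0"
| "van z0 (Suc m) h \<longleftrightarrow> h z0 = 0 \<and> (\<forall>i. van z0 m (Dtot i h))"

lemma van_at: "van z0 m h \<Longrightarrow> h z0 = 0" by (cases m) auto

lemma van_add: "difffun f \<Longrightarrow> difffun g \<Longrightarrow> van z0 m f \<Longrightarrow> van z0 m g \<Longrightarrow> van z0 m (\<lambda>z. f z + g z)"
proof (induction m arbitrary: f g)
  case (Suc m) then show ?case by (simp add: Dtot_add D_Dtot)
qed simp

lemma van_down: "difffun h \<Longrightarrow> van z0 (Suc m) h \<Longrightarrow> van z0 m h"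
proof (induction m arbitrary: h)
  case (Suc m) then show ?case by (simp add: D_Dtot)
qed simp

lemma van_mult: "difffun g \<Longrightarrow> difffun h \<Longrightarrow> van z0 m h \<Longrightarrow> van z0 m (\<lambda>z. g z * h z)"
proof (induction m arbitrary: g h)
  case 0 then show ?case by simp
next
  case (Suc m)
  have h: "van z0 m h" using van_down Suc.prems by blast
  have "van z0 m (\<lambda>z. Dtot i g z * h z + g z * Dtot i h z)" for i
    using Suc by (intro van_add Suc.IH D_mult D_Dtot h) auto
  then show ?case using Suc.prems by (simp add: Dtot_mult)
qed

lemma van_DJ:
  fixes K :: "'i::finite \<Rightarrow> nat"
  shows "\<forall>h m. difffun h \<longrightarrow> van z0 m h \<longrightarrow> mlen K \<le> m \<longrightarrow> DJ K h z0 = 0"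
proof (induction K rule: idx_induct)
  case 1 then show ?case by (auto intro: van_at)
next
  case (2 K i)
  show ?case
  proof (intro allI impI)
    fix h m assume h: "difffun h" and v: "van z0 m h" and ml: "mlen (inc i K) \<le> m"
    obtain m' where m: "m = Suc m'" using ml by (cases m) (auto simp: mlen_inc)
    have "van z0 m' (Dtot i h)" using v m by simp
    then have "DJ K (Dtot i h) z0 = 0" using 2 h ml m by (simp add: D_Dtot mlen_inc)
    then show "DJ (inc i K) h z0 = 0" by (simp add: DJ_inc'[OF h])
  qed
qed

section \<open>Monomials in the independent variables\<close>

definition pw :: "nat \<Rightarrow> real \<Rightarrow> real" where "pw n x = x ^ n / fact n"

definition xmono :: "('i::finite) jet \<Rightarrow> ('i \<Rightarrow> nat) \<Rightarrow> 'i dfun" where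
  "xmono z0 L = (\<lambda>z. \<Prod>j\<in>UNIV. pw (L j) (z (X j) - z0 (X j)))"

lemma pw_deriv: "((\<lambda>t. pw n (t - a)) has_real_derivative (if 0 < n then pw (n - 1) (t - a) else 0)) (at t)"
proof (cases n)
  case 0 then show ?thesis by (simp add: pw_def)
next
  case (Suc k)
  have p: "((\<lambda>x. x ^ Suc k) has_real_derivative real (Suc k) * (t - a) ^ k) (at (t - a))"
    using DERIV_pow[of "Suc k" "t - a" UNIV] by simp
  have q: "((\<lambda>t. t - a) has_real_derivative 1) (at t)" by (auto intro!: derivative_eq_intros)
  have "((\<lambda>t. (t - a) ^ Suc k / fact (Suc k)) has_real_derivative (real (Suc k) * (t - a) ^ k * 1 / fact (Suc k))) (at t)"
    by (rule DERIV_cdivide[OF DERIV_chain2[OF p q]])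
  moreover have "real (Suc k) * (t - a) ^ k * 1 / fact (Suc k) = (t - a) ^ k / fact k"
    by (simp add: fact_Suc divide_simps)
  ultimately show ?thesis using Suc by (simp add: pw_def)
qed

lemma D_prod: "(\<And>a. a \<in> A \<Longrightarrow> difffun (F a)) \<Longrightarrow> difffun (\<lambda>z. \<Prod>a\<in>A. F a z)"
proof (induction A rule: infinite_finite_induct)
  case (insert x F) then show ?case by (simp add: D_mult)
qed auto

lemma D_pw: "difffun f \<Longrightarrow> difffun (\<lambda>z. pw n (f z))"
proof -
  assume f: "difffun f"
  have "difffun (\<lambda>z. f z ^ n)" by (induction n) (use f in \<open>auto intro: D_mult\<close>)
  then show ?thesis unfolding pw_def using D_mult[OF _ D_const, of "\<lambda>z. f z ^ n" "1 / fact n"] by simp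
qed

lemma D_mono: "difffun (xmono z0 L)"
  unfolding xmono_def by (intro D_prod D_pw D_diff D_coord D_const)

lemma dep_mono_fn: "dep (range X) (xmono z0 L)"
  unfolding xmono_def dep_def by (auto intro!: prod.cong)

lemma pdU_xonly: "dep (range X) f \<Longrightarrow> pd (U J) f = (\<lambda>z. 0)"
  by (rule pd_dep0) auto

lemma ordle0_xonly: "dep (range X) f \<Longrightarrow> ordle 0 f"
  unfolding ordle_def using pdU_xonly by blast

lemma Dtot_xonly: "dep (range X) (f::('i::finite) dfun) \<Longrightarrow> Dtot i f = pd (X i) f"
  by (simp add: Dtot_alt[OF ordle0_xonly] pdU_xonly)

lemma pdX_mono: "pd (X i) (xmono z0 L) = (if 0 < L i then xmono z0 (dec i L) else (\<lambda>z. 0))"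
proof (rule pd_eqI)
  fix z :: "'a jet"
  let ?r = "\<Prod>j\<in>UNIV - {i}. pw (L j) (z (X j) - z0 (X j))"
  have split: "xmono z0 L (z(X i := t)) = pw (L i) (t - z0 (X i)) * ?r" for t
  proof -
    have "xmono z0 L (z(X i := t)) = pw (L i) ((z(X i := t)) (X i) - z0 (X i)) * (\<Prod>j\<in>UNIV - {i}. pw (L j) ((z(X i := t)) (X j) - z0 (X j)))"
      unfolding xmono_def by (rule prod.remove) auto
    also have "(\<Prod>j\<in>UNIV - {i}. pw (L j) ((z(X i := t)) (X j) - z0 (X j))) = ?r" by (intro prod.cong) auto
    finally show ?thesis by (simp only: fun_upd_same)
  qed
  have "((\<lambda>t. pw (L i) (t - z0 (X i)) * ?r) has_real_derivative (if 0 < L i then pw (L i - 1) (z (X i) - z0 (X i)) else 0) * ?r) (at (z (X i)))"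
    by (intro DERIV_cmult_right pw_deriv) 
  moreover have "(if 0 < L i then pw (L i - 1) (z (X i) - z0 (X i)) else 0) * ?r = (if 0 < L i then xmono z0 (dec i L) else (\<lambda>z. 0)) z"
  proof (cases "0 < L i")
    case True
    have "xmono z0 (dec i L) z = pw (dec i L i) (z (X i) - z0 (X i)) * (\<Prod>j\<in>UNIV - {i}. pw (dec i L j) (z (X j) - z0 (X j)))"
      unfolding xmono_def by (rule prod.remove) auto
    also have "(\<Prod>j\<in>UNIV - {i}. pw (dec i L j) (z (X j) - z0 (X j))) = ?r" by (intro prod.cong) (auto simp: dec_def)
    finally show ?thesis using True by (simp add: dec_def fun_upd_def)
  qed simp
  ultimately show "((\<lambda>t. xmono z0 L (z(X i := t))) has_real_derivative (if 0 < L i then xmono z0 (dec i L) else (\<lambda>z. 0)) z) (at (z (X i)))"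
    unfolding split by simp
qed

lemma Dtot_mono: "Dtot i (xmono z0 L) = (if 0 < L i then xmono z0 (dec i L) else (\<lambda>z. 0))"
  by (simp add: Dtot_xonly[OF dep_mono_fn] pdX_mono)

lemma mono_at: "xmono z0 L z0 = (if L = (\<lambda>i. 0) then 1 else 0)"
proof (cases "L = (\<lambda>i. 0)")
  case True then show ?thesis by (simp add: xmono_def pw_def)
next
  case False
  then obtain i where i: "L i \<noteq> 0" by auto
  have "pw (L i) (z0 (X i) - z0 (X i)) = 0" using i by (simp add: pw_def)
  then have "xmono z0 L z0 = 0" unfolding xmono_def by (intro prod_zero) auto
  then show ?thesis using False by simp
qed



section \<open>Taylor polynomial and uniqueness\<close>

definition madd :: "('i \<Rightarrow> nat) \<Rightarrow> ('i \<Rightarrow> nat) \<Rightarrow> ('i \<Rightarrow> nat)" where "madd M L = (\<lambda>i. M i + L i)"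

lemma madd_zero[simp]: "madd M (\<lambda>i. 0) = M" unfolding madd_def by simp
lemma madd_inc: "madd M (inc i L) = madd (inc i M) L" unfolding madd_def inc_def by (auto simp: fun_eq_iff)

definition Tay :: "('i::finite) jet \<Rightarrow> ('i \<Rightarrow> nat) \<Rightarrow> nat \<Rightarrow> 'i dfun" where
  "Tay z0 M m = (\<lambda>z. z (U M) - (\<Sum>L\<in>AN m. z0 (U (madd M L)) * xmono z0 L z))"

lemma D_Tay: "difffun (Tay z0 M m)"
  unfolding Tay_def by (intro D_diff D_coord D_sum D_mult D_const D_mono)

lemma zero_AN[simp]: "(\<lambda>i. 0) \<in> AN m" unfolding AN_def mlen_def by simp

lemma Tay_at: "Tay z0 M m z0 = 0"
proof -
  have "(\<Sum>L\<in>AN m. z0 (U (madd M L)) * xmono z0 L z0) = (\<Sum>L\<in>AN m. if L = (\<lambda>i. 0) then z0 (U (madd M L)) else 0)"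
    by (intro sum.cong) (auto simp: mono_at)
  also have "\<dots> = z0 (U M)" by (simp add: sum.delta[OF finite_AN])
  finally show ?thesis unfolding Tay_def by simp
qed

lemma Dtot_Tay: "Dtot i (Tay z0 M (Suc m)) = Tay z0 (inc i M) m"
proof
  fix z
  have dS: "difffun (\<lambda>z. \<Sum>L\<in>AN (Suc m). z0 (U (madd M L)) * xmono z0 L z)"
    by (intro D_sum D_mult D_const D_mono)
  have "Dtot i (\<lambda>z. \<Sum>L\<in>AN (Suc m). z0 (U (madd M L)) * xmono z0 L z) z
      = (\<Sum>L\<in>AN (Suc m). z0 (U (madd M L)) * Dtot i (xmono z0 L) z)"
    by (simp add: Dtot_sum Dtot_cmult D_mult D_mono)
  also have "\<dots> = (\<Sum>L\<in>AN (Suc m). if 0 < L i then z0 (U (madd M L)) * xmono z0 (dec i L) z else 0)"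
    by (intro sum.cong) (auto simp: Dtot_mono)
  also have "\<dots> = (\<Sum>L\<in>AN m. z0 (U (madd M (inc i L))) * xmono z0 L z)"
    by (rule shift_sum[OF inc_AN finite_AN, where F="\<lambda>K L. z0 (U (madd M K)) * xmono z0 L z"])
       (auto simp: AN_def mlen_dec)
  finally show "Dtot i (Tay z0 M (Suc m)) z = Tay z0 (inc i M) m z"
    unfolding Tay_def using dS by (simp add: Dtot_diff Dtot_coordU madd_inc)
qed

lemma van_Tay: "van z0 m (Tay z0 M m)"
proof (induction m arbitrary: M)
  case 0 then show ?case by (simp add: Tay_at)
next
  case (Suc m) then show ?case by (simp add: Tay_at Dtot_Tay)
qed

lemma pdU_Tay: "pd (U J) (Tay z0 (\<lambda>i. 0) m) = (\<lambda>z. if J = (\<lambda>i. 0) then 1 else 0)"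
proof -
  have dep: "dep (range X) (\<lambda>z. \<Sum>L\<in>AN m. z0 (U (madd (\<lambda>i. 0) L)) * xmono z0 L z)"
    by (intro dep_sum dep_mult dep_const dep_mono_fn)
  have "pd (U J) (Tay z0 (\<lambda>i. 0) m) = (\<lambda>z. pd (U J) (\<lambda>z. z (U (\<lambda>i. 0))) z - pd (U J) (\<lambda>z. \<Sum>L\<in>AN m. z0 (U (madd (\<lambda>i. 0) L)) * xmono z0 L z) z)"
    unfolding Tay_def by (intro pd_diff ldiff_coord D_ldiff D_sum D_mult D_const D_mono)
  also have "\<dots> = (\<lambda>z. if J = (\<lambda>i. 0) then 1 else 0)"
    by (simp add: pd_coord pdU_xonly[OF dep])
  finally show ?thesis .
qed

lemma uniqueness:
  fixes Y :: "('i::finite) dfun"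
  assumes Y: "difffun Y" and E: "\<And>B. difffun B \<Longrightarrow> euler (\<lambda>z. Y z * B z) = (\<lambda>z. 0)"
  shows "Y = (\<lambda>z. 0)"
proof
  fix z0 :: "'i jet"
  obtain N where N: "ordle N Y" using D_ordle Y by blast
  define B where "B = Tay z0 (\<lambda>i. 0) N"
  have dB: "difffun B" unfolding B_def by (rule D_Tay)
  have vB: "van z0 N B" unfolding B_def by (rule van_Tay)
  have "euler (\<lambda>z. Y z * B z) z0 = adjapply (frechet_op Y) B z0 + adjapply (frechet_op B) Y z0"
    by (simp add: euler_mult[OF Y dB])
  moreover have "adjapply (frechet_op B) Y z0 = Y z0"
  proof -
    have "dsupp (frechet_op B) \<subseteq> {\<lambda>i. 0}"
      unfolding dsupp_def frechet_op_def B_def pdU_Tay by auto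
    from adjapply_alt[OF _ this] show ?thesis
      by (simp add: frechet_op_def B_def pdU_Tay mlen_def)
  qed
  moreover have "adjapply (frechet_op Y) B z0 = 0"
  proof -
    have sY: "dsupp (frechet_op Y) \<subseteq> AN N" using Jset_AN[OF N] by (simp add: dsupp_frechet_op)
    have "DJ J (\<lambda>w. frechet_op Y J w * B w) z0 = 0" if "J \<in> AN N" for J
    proof -
      have "van z0 N (\<lambda>w. frechet_op Y J w * B w)"
        using vB dB Y by (intro van_mult) (auto simp: frechet_op_def)
      moreover have "difffun (\<lambda>w. frechet_op Y J w * B w)" using dB Y by (auto simp: frechet_op_def intro!: D_mult)
      ultimately show ?thesis using van_DJ that unfolding AN_def by blast
    qed
    then show ?thesis by (simp add: adjapply_alt[OF finite_AN sY])
  qed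
  ultimately show "Y z0 = 0" using E[OF dB] by (metis add.left_neutral)
qed



lemma euler_Div_eq:
  fixes f g :: "('i::finite) dfun"
  assumes "Div (\<lambda>z. f z - g z)" "difffun f" "difffun g"
  shows "euler f = euler g"
proof -
  have "(\<lambda>z. euler f z - euler g z) = (\<lambda>z. 0)"
    using euler_Div[OF assms(1)] euler_diff[OF assms(2,3)] by simp
  then show ?thesis by (auto simp: fun_eq_iff)
qed

lemma helmholtz:
  fixes L :: "('i::finite) dfun"
  assumes L: "difffun L" and P: "difffun P"
  shows "frechet (euler L) P = adjapply (frechet_op (euler L)) P"
proof -
  define E where "E = euler L"
  have dE: "difffun E" unfolding E_def using L by (rule D_euler)
  have H1: "Div (\<lambda>z. frechet L Q z - E z * Q z)" if Q: "difffun Q" for Q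
  proof -
    have "Div (\<lambda>z. (\<lambda>z. 1) z * applyop (frechet_op L) Q z - adjapply (frechet_op L) (\<lambda>z. 1) z * Q z)"
      using L Q by (intro op_ibp is_dop_frechet_op D_const)
    then show ?thesis by (rule Div_cong) (simp add: frechet_def E_def euler_def)
  qed
  define Y where "Y = (\<lambda>z. frechet E P z - adjapply (frechet_op E) P z)"
  have dY: "difffun Y" unfolding Y_def using dE P by (intro D_diff D_frechet D_adjapply is_dop_frechet_op)
  have "euler (\<lambda>z. Y z * B z) = (\<lambda>z. 0)" if B: "difffun B" for B
  proof -
    have X1: "Div (frechet (\<lambda>z. frechet L P z - E z * P z) B)" by (rule Div_frechet[OF H1[OF P] B])
    have X1e: "frechet (\<lambda>z. frechet L P z - E z * P z) B = (\<lambda>z. frechet (frechet L P) B z - (frechet E B z * P z + E z * frechet P B z))"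
      using L P dE by (simp add: frechet_diff frechet_mult D_frechet D_mult)
    have X2: "Div (frechet (\<lambda>z. frechet L B z - E z * B z) P)" by (rule Div_frechet[OF H1[OF B] P])
    have X2e: "frechet (\<lambda>z. frechet L B z - E z * B z) P = (\<lambda>z. frechet (frechet L B) P z - (frechet E P z * B z + E z * frechet B P z))"
      using L B dE by (simp add: frechet_diff frechet_mult D_frechet D_mult)
    have Q: "difffun (\<lambda>z. frechet P B z - frechet B P z)" using P B by (intro D_diff D_frechet)
    have X3: "Div (\<lambda>z. frechet L (\<lambda>z. frechet P B z - frechet B P z) z - E z * (frechet P B z - frechet B P z))"
      by (rule H1[OF Q])
    have SV: "frechet (frechet L P) B z - frechet (frechet L B) P z = frechet L (\<lambda>z. frechet P B z - frechet B P z) z" for z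
      using second_variation[OF L P B] by metis
    have X4: "Div (\<lambda>z. P z * applyop (frechet_op E) B z - adjapply (frechet_op E) P z * B z)"
      using dE P B by (intro op_ibp is_dop_frechet_op)
    have "Div (\<lambda>z. ((frechet (\<lambda>z. frechet L P z - E z * P z) B z - frechet (\<lambda>z. frechet L B z - E z * B z) P z)
       - (frechet L (\<lambda>z. frechet P B z - frechet B P z) z - E z * (frechet P B z - frechet B P z)))
       + (P z * applyop (frechet_op E) B z - adjapply (frechet_op E) P z * B z))"
      by (intro Div_add Div_diff X1 X2 X3 X4)
    then have "Div (\<lambda>z. Y z * B z)"
    proof (rule Div_cong)
      fix z
      show "((frechet (\<lambda>z. frechet L P z - E z * P z) B z - frechet (\<lambda>z. frechet L B z - E z * B z) P z)
       - (frechet L (\<lambda>z. frechet P B z - frechet B P z) z - E z * (frechet P B z - frechet B P z)))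
       + (P z * applyop (frechet_op E) B z - adjapply (frechet_op E) P z * B z) = Y z * B z"
        unfolding X1e X2e SV[symmetric] Y_def frechet_def[symmetric] by (simp add: algebra_simps)
    qed
    then show ?thesis by (rule euler_Div)
  qed
  then have "Y = (\<lambda>z. 0)" by (rule uniqueness[OF dY])
  then show ?thesis unfolding Y_def E_def by (auto simp: fun_eq_iff)
qed




lemma frechet_applyop:
  fixes W :: "('i::finite) dop"
  assumes W: "is_dop W" and G: "difffun G" and P: "difffun P"
  shows "frechet (applyop W G) P = (\<lambda>z. applyop (\<lambda>J. frechet (W J) P) G z + applyop W (frechet G P) z)"
proof -
  have WJ: "difffun (W J)" for J using W unfolding is_dop_def by blast
  have fin: "finite (dsupp W)" using W unfolding is_dop_def by blast
  have sub: "dsupp (\<lambda>J. frechet (W J) P) \<subseteq> dsupp W" unfolding dsupp_def by auto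
  have "frechet (applyop W G) P = frechet (\<lambda>z. \<Sum>J\<in>dsupp W. W J z * DJ J G z) P" by (simp add: applyop_def)
  also have "\<dots> = (\<lambda>z. \<Sum>J\<in>dsupp W. frechet (\<lambda>z. W J z * DJ J G z) P z)"
    using WJ G by (intro frechet_sum D_mult D_DJ)
  also have "\<dots> = (\<lambda>z. \<Sum>J\<in>dsupp W. frechet (W J) P z * DJ J G z + W J z * DJ J (frechet G P) z)"
    using WJ G P by (simp add: frechet_mult D_DJ frechet_DJ)
  also have "\<dots> = (\<lambda>z. applyop (\<lambda>J. frechet (W J) P) G z + applyop W (frechet G P) z)"
    by (simp add: applyop_alt[OF fin sub] applyop_def sum.distrib)
  finally show ?thesis .
qed

theorem proposition4p2:
  fixes G Q P :: "('i::finite) dfun"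
    and RQ RP Sop W :: "'i dop"
  assumes "difffun G" and "difffun Q" and "difffun P"
    and "is_dop RQ" and "is_dop RP"
    and adjsym: "adjapply (frechet_op G) Q = applyop RQ G"
    and nonmult: "euler (\<lambda>z. Q z * G z) \<noteq> (\<lambda>z. 0)"
    and sym: "frechet G P = applyop RP G"
    and S_def: "is_dop Sop"
      "\<forall>B. difffun B \<longrightarrow> applyop Sop B = (\<lambda>z. adjapply RQ B z + frechet Q B z)"
    and W_def: "is_dop W" "\<forall>B. difffun B \<longrightarrow> applyop W B = adjapply Sop B"
  shows "euler (\<lambda>z. applyop Sop P z * G z) = (\<lambda>z. 0) \<longleftrightarrow>
         (\<lambda>z. applyop (\<lambda>J. frechet (W J) P) G z + applyop W (applyop RP G) z
              + adjapply (frechet_op P) (applyop W G) z) = (\<lambda>z. 0)"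
proof -
  note G = assms(1) and Qd = assms(2) and P = assms(3) and RQ = assms(4)
  define E where "E = applyop W G"
  have dE: "difffun E" unfolding E_def using W_def(1) G by (rule D_applyop)
  have EW: "E = adjapply Sop G" unfolding E_def using W_def(2) G by blast
  have dQG: "difffun (\<lambda>z. Q z * G z)" using Qd G by (rule D_mult)
  have eQG: "euler (\<lambda>z. Q z * G z) = (\<lambda>z. adjapply (frechet_op Q) G z + applyop RQ G z)"
    using euler_mult[OF Qd G] adjsym by simp
  have E_eq: "E = euler (\<lambda>z. Q z * G z)"
  proof -
    define Y where "Y = (\<lambda>z. E z - euler (\<lambda>z. Q z * G z) z)"
    have dY: "difffun Y" unfolding Y_def using dE dQG by (intro D_diff D_euler)
    have "euler (\<lambda>z. Y z * B z) = (\<lambda>z. 0)" if B: "difffun B" for B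
    proof -
      have I1: "Div (\<lambda>z. G z * applyop Sop B z - adjapply Sop G z * B z)" by (rule op_ibp[OF S_def(1) G B])
      have I2: "Div (\<lambda>z. B z * applyop RQ G z - adjapply RQ B z * G z)" by (rule op_ibp[OF RQ B G])
      have I3: "Div (\<lambda>z. G z * applyop (frechet_op Q) B z - adjapply (frechet_op Q) G z * B z)"
        by (rule op_ibp[OF is_dop_frechet_op[OF Qd] G B])
      have SB: "applyop Sop B = (\<lambda>z. adjapply RQ B z + frechet Q B z)" using S_def(2) B by blast
      have "Div (\<lambda>z. - (G z * applyop Sop B z - adjapply Sop G z * B z) + (G z * applyop (frechet_op Q) B z - adjapply (frechet_op Q) G z * B z)
           - (B z * applyop RQ G z - adjapply RQ B z * G z))"
        by (intro Div_add Div_diff Div_uminus I1 I2 I3)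
      then have "Div (\<lambda>z. Y z * B z)"
        by (rule Div_cong) (unfold Y_def eQG SB, simp add: EW[symmetric] frechet_def algebra_simps)
      then show ?thesis by (rule euler_Div)
    qed
    then have "Y = (\<lambda>z. 0)" by (rule uniqueness[OF dY])
    then show ?thesis unfolding Y_def by (auto simp: fun_eq_iff)
  qed
  have dSP: "difffun (applyop Sop P)" using S_def(1) P by (rule D_applyop)
  have step2: "euler (\<lambda>z. applyop Sop P z * G z) = euler (\<lambda>z. E z * P z)"
  proof (rule euler_Div_eq)
    have "Div (\<lambda>z. G z * applyop Sop P z - adjapply Sop G z * P z)" by (rule op_ibp[OF S_def(1) G P])
    then show "Div (\<lambda>z. applyop Sop P z * G z - E z * P z)" by (rule Div_cong) (simp add: EW mult_ac)
  qed (use dSP G dE P in \<open>auto intro: D_mult\<close>)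
  have step3: "euler (\<lambda>z. E z * P z) = (\<lambda>z. frechet E P z + adjapply (frechet_op P) E z)"
    using euler_mult[OF dE P] helmholtz[OF dQG P] E_eq by simp
  have step4: "frechet E P = (\<lambda>z. applyop (\<lambda>J. frechet (W J) P) G z + applyop W (applyop RP G) z)"
    unfolding E_def using frechet_applyop[OF W_def(1) G P] sym by simp
  have "euler (\<lambda>z. applyop Sop P z * G z) = (\<lambda>z. frechet E P z + adjapply (frechet_op P) E z)"
    using step2 step3 by simp
  also have "\<dots> = (\<lambda>z. applyop (\<lambda>J. frechet (W J) P) G z + applyop W (applyop RP G) z
              + adjapply (frechet_op P) (applyop W G) z)"
    using step4 by (simp add: E_def)
  finally have "euler (\<lambda>z. applyop Sop P z * G z) = (\<lambda>z. applyop (\<lambda>J. frechet (W J) P) G z + applyop W (applyop RP G) z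
              + adjapply (frechet_op P) (applyop W G) z)" .
  then show ?thesis by simp
qed


end
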